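(* Let $\widetilde v^\alpha\in\mathbb C[[t^*_*]]$, $\alpha\in[N]$, satisfy $\widetilde v^\alpha|_{t^*_{\ge1}=0}=t^\alpha_0$, $\mathcal S\widetilde v^\alpha=\delta^{\alpha,1}$ and $\mathcal D\widetilde v^\alpha=0$, and consider the associated isomorphism $\mathcal A^{\mathrm{wk}}_v\cong\mathbb C[[t^*_*]]$. Let $f\in\mathbb C[[t^*_*]]$ satisfy $\mathcal D(f)=d\cdot f$ for some $d\in\mathbb Z$. Then: (1) $f(v^*_* )\in\mathcal A^{\mathrm{rt}}_{v;d}$; (2) if $f\in\mathbb C[[t^*_*]]^{(k)}$ for some $k\ge0$, and $f=\sum_{i\ge k}h_i$ with $h_i$ homogeneous of degree $i$ when $t^\gamma_c$ is given degree $c$, then $f(v^*_* )=\sum_{i\ge k}P_i(v^1_x)^{d-i}$ with $P_i\in\mathcal A_{v;i}$, $\frac{\partial P_i}{\partial v^1_x}=0$, and $P_k=h_k|_{t^\gamma_n\mapsto v^\gamma_n}$.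
   Context: Formal variables $t^\alpha_a$, $\alpha\in[N]$, $a\ge0$. $\mathbb C[[t^*_*]]^{(d)}$ is the ideal of infinite linear combinations of monomials $\prod t^{\alpha_i}_{d_i}$ with $\sum d_i\ge d$. $\mathcal S:=\frac{\partial}{\partial t^1_0}-\sum_{k\ge0}t^\alpha_{k+1}\frac{\partial}{\partial t^\alpha_k}$, $\mathcal D:=\frac{\partial}{\partial t^1_1}-\sum_{k\ge0}t^\alpha_k\frac{\partial}{\partial t^\alpha_k}$. $\mathcal A_v=\mathbb C[[v^1,\dots,v^N]][v^\alpha_n,n\ge1]$ with $\deg v^\alpha_n=n$, $\mathcal A_{v;d}$ its degree-$d$ part; $\mathcal A^{\mathrm{wk}}_v$ is the algebra of formal power series in $v^\alpha_n-\delta^{\alpha,1}\delta_{n,1}$ ($\alpha\in[N]$, $n\ge0$), in which $(v^1_x)^{-i}=\sum_k\binom{-i}k(v^1_x-1)^k$. $\mathcal A^{\mathrm{rt}}_{v;d}\subset\mathcal A^{\mathrm{wk}}_v$ consists of elements $\sum_{i\le m}P_i(v^1_x)^i$ with $m\in\mathbb Z$, $P_i\in\mathcal A_{v;d-i}$, $\partial P_i/\partial v^1_x=0$. With $\widetilde v^\alpha_n:=\partial^n\widetilde v^\alpha/(\partial t^1_0)^n$ one has $\widetilde v^\alpha_n-t^\alpha_n-\delta_{n,1}\delta^{\alpha,1}\in\mathbb C[[t^*_*]]^{(n+1)}$, and $P\mapsto P|_{v^\gamma_n\mapsto\widetilde v^\gamma_n}$ is an algebra isomorphism $\mathcal A^{\mathrm{wk}}_v\to\mathbb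 C[[t^*_*]]$; the preimage of $f$ is denoted $f(v^*_* )$. *)

theory Defs
  imports Complex_Main "HOL-Library.Poly_Mapping" "HOL-Library.Product_Lexorder"
begin

(* Variables t^alpha_a (resp. v^alpha_n) are indexed by pairs (alpha, a) :: nat * nat,
   with alpha in {1..N}. *)
type_synonym mon = "(nat \<times> nat) \<Rightarrow>\<^sub>0 nat"
type_synonym ser = "mon \<Rightarrow> complex"

definition valid :: "nat \<Rightarrow> ser \<Rightarrow> bool" where
  "valid N f \<longleftrightarrow> (\<forall>m. f m \<noteq> 0 \<longrightarrow> fst ` Poly_Mapping.keys m \<subseteq> {1..N})"

definition gdeg :: "mon \<Rightarrow> nat" where
  "gdeg m = (\<Sum>x\<in>Poly_Mapping.keys m. snd x * Poly_Mapping.lookup m x)"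

(* formal (coefficientwise finite) sum: sum over the support of the summand *)
definition fsum :: "('i \<Rightarrow> complex) \<Rightarrow> 'i set \<Rightarrow> complex" where
  "fsum g A = (\<Sum>i\<in>{i\<in>A. g i \<noteq> 0}. g i)"

definition ser_zero :: ser where "ser_zero = (\<lambda>_. 0)"
definition ser_one :: ser where "ser_one = (\<lambda>m. if m = 0 then 1 else 0)"
definition ser_var :: "nat \<times> nat \<Rightarrow> ser" where
  "ser_var x = (\<lambda>m. if m = Poly_Mapping.single x 1 then 1 else 0)"

definition ser_mult :: "ser \<Rightarrow> ser \<Rightarrow> ser" where
  "ser_mult f g = (\<lambda>m. \<Sum>(a, b) \<in> {(a, b). a + b = m}. f a * g b)"

fun ser_pow :: "ser \<Rightarrow> nat \<Rightarrow> ser" where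
  "ser_pow f 0 = ser_one"
| "ser_pow f (Suc n) = ser_mult f (ser_pow f n)"

definition ser_pd :: "nat \<times> nat \<Rightarrow> ser \<Rightarrow> ser" where
  "ser_pd x f = (\<lambda>m. of_nat (Poly_Mapping.lookup m x + 1) * f (m + Poly_Mapping.single x 1))"

definition in_ideal :: "nat \<Rightarrow> ser \<Rightarrow> bool" where
  "in_ideal d f \<longleftrightarrow> (\<forall>m. f m \<noteq> 0 \<longrightarrow> d \<le> gdeg m)"

definition homog :: "nat \<Rightarrow> ser \<Rightarrow> bool" where
  "homog i f \<longleftrightarrow> (\<forall>m. f m \<noteq> 0 \<longrightarrow> gdeg m = i)"

definition opS :: "nat \<Rightarrow> ser \<Rightarrow> ser" where
  "opS N f = (\<lambda>m. ser_pd (1, 0) f m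
      - fsum (\<lambda>p. ser_mult (ser_var (fst p, Suc (snd p))) (ser_pd p f) m) ({1..N} \<times> UNIV))"

definition opD :: "nat \<Rightarrow> ser \<Rightarrow> ser" where
  "opD N f = (\<lambda>m. ser_pd (1, 1) f m
      - fsum (\<lambda>p. ser_mult (ser_var p) (ser_pd p f) m) ({1..N} \<times> UNIV))"

definition restr0 :: "ser \<Rightarrow> ser" where
  "restr0 f = (\<lambda>m. if (\<forall>x\<in>Poly_Mapping.keys m. snd x = 0) then f m else 0)"

definition msubst :: "(nat \<times> nat \<Rightarrow> ser) \<Rightarrow> mon \<Rightarrow> ser" where
  "msubst W m = foldr (\<lambda>x acc. ser_mult (ser_pow (W x) (Poly_Mapping.lookup m x)) acc)
                      (sorted_list_of_set (Poly_Mapping.keys m)) ser_one"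

(* tilde v^gamma_n - delta^{gamma,1} delta_{n,1}, with tilde v^gamma_n = d^n tilde v^gamma / (dt^1_0)^n *)
definition wt :: "(nat \<Rightarrow> ser) \<Rightarrow> nat \<times> nat \<Rightarrow> ser" where
  "wt vt x = (\<lambda>\<mu>. ((ser_pd (1, 0) ^^ snd x) (vt (fst x))) \<mu>
                  - (if x = (1, 1) \<and> \<mu> = 0 then 1 else 0))"

(* An element P of A^wk_v is a power series in the variables w^alpha_n = v^alpha_n - delta^{alpha,1}delta_{n,1}
   (coefficient function P on monomials in the w's).  Phi is P |-> P|_{v^gamma_n -> tilde v^gamma_n}. *)
definition Phi :: "(nat \<Rightarrow> ser) \<Rightarrow> ser \<Rightarrow> ser" where
  "Phi vt P = (\<lambda>\<mu>. fsum (\<lambda>m. P m * msubst (wt vt) m \<mu>) UNIV)"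

(* (v^1_x)^i = sum_k binom(i,k) (v^1_x - 1)^k, as element of A^wk_v (v^1_x = v^1_1) *)
definition vx_pow :: "int \<Rightarrow> ser" where
  "vx_pow i = (\<lambda>m. if Poly_Mapping.keys m \<subseteq> {(1, 1)} then (of_int i :: complex) gchoose (Poly_Mapping.lookup m (1, 1)) else 0)"

(* A_{v;e}: series in v^alpha_0, polynomial in v^alpha_n (n>=1), homogeneous of degree e *)
definition Av_deg :: "nat \<Rightarrow> int \<Rightarrow> ser \<Rightarrow> bool" where
  "Av_deg N e P \<longleftrightarrow> valid N P \<and> (\<forall>m. P m \<noteq> 0 \<longrightarrow> int (gdeg m) = e)"

(* A^rt_{v;d}.  Since dP_i/dv^1_x = 0, P_i involves no v^1_1, so its coefficients in the
   v-variables and in the w-variables coincide; P_i is embedded in A^wk_v literally. *)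
definition Art :: "nat \<Rightarrow> int \<Rightarrow> ser \<Rightarrow> bool" where
  "Art N d F \<longleftrightarrow> (\<exists>M::int. \<exists>P::int \<Rightarrow> ser.
      (\<forall>i\<le>M. Av_deg N (d - i) (P i) \<and> ser_pd (1, 1) (P i) = ser_zero)
      \<and> F = (\<lambda>\<mu>. fsum (\<lambda>i. ser_mult (P i) (vx_pow i) \<mu>) {..M}))"

end

theory Submission
  imports Defs "HOL-Library.FuncSet"
begin


abbreviation lk :: "mon \<Rightarrow> nat \<times> nat \<Rightarrow> nat" where "lk \<equiv> Poly_Mapping.lookup"
abbreviation ks :: "mon \<Rightarrow> (nat \<times> nat) set" where "ks \<equiv> Poly_Mapping.keys"
abbreviation ee :: "nat \<times> nat \<Rightarrow> mon" where "ee x \<equiv> Poly_Mapping.single x (1::nat)"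

definition tdeg :: "mon \<Rightarrow> nat" where "tdeg m = (\<Sum>x\<in>ks m. lk m x)"

lemma lk_add[simp]: "lk (a + b) x = lk a x + lk b x"
  by (simp add: lookup_add)
lemma lk_single: "lk (Poly_Mapping.single y k) x = (if x = y then k else 0)"
  by (simp add: lookup_single)
lemma lk_minus[simp]: "lk (a - b) x = lk a x - lk b x"
  by (simp add: lookup_minus)
lemma in_ks: "x \<in> ks m \<longleftrightarrow> lk m x \<noteq> 0"
  by (simp add: in_keys_iff)

lemma mon_eqI: "(\<And>x. lk a x = lk b x) \<Longrightarrow> a = b"
  by (rule poly_mapping_eqI)

lemma gdeg_sup: "finite K \<Longrightarrow> ks m \<subseteq> K \<Longrightarrow> gdeg m = (\<Sum>x\<in>K. snd x * lk m x)"
  unfolding gdeg_def by (rule sum.mono_neutral_left) (auto simp: in_ks)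
lemma tdeg_sup: "finite K \<Longrightarrow> ks m \<subseteq> K \<Longrightarrow> tdeg m = (\<Sum>x\<in>K. lk m x)"
  unfolding tdeg_def by (rule sum.mono_neutral_left) (auto simp: in_ks)

lemma gdeg_add[simp]: "gdeg (a + b) = gdeg a + gdeg b"
proof -
  let ?K = "ks a \<union> ks b"
  have k: "ks (a+b) \<subseteq> ?K" by (rule keys_add)
  show ?thesis
    by (simp add: gdeg_sup[OF _ k] gdeg_sup[of ?K a] gdeg_sup[of ?K b] sum.distrib algebra_simps)
qed
lemma tdeg_add[simp]: "tdeg (a + b) = tdeg a + tdeg b"
proof -
  let ?K = "ks a \<union> ks b"
  have k: "ks (a+b) \<subseteq> ?K" by (rule keys_add)
  show ?thesis
    by (simp add: tdeg_sup[OF _ k] tdeg_sup[of ?K a] tdeg_sup[of ?K b] sum.distrib algebra_simps)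
qed
lemma gdeg_single[simp]: "gdeg (Poly_Mapping.single x k) = snd x * k"
  by (simp add: gdeg_def)
lemma tdeg_single[simp]: "tdeg (Poly_Mapping.single x k) = k"
  by (simp add: tdeg_def)
lemma gdeg_0[simp]: "gdeg 0 = 0" by (simp add: gdeg_def)
lemma tdeg_0[simp]: "tdeg 0 = 0" by (simp add: tdeg_def)
lemma tdeg_eq_0: "tdeg m = 0 \<longleftrightarrow> m = 0"
  unfolding tdeg_def by (auto simp: in_ks intro!: mon_eqI)
lemma lk_le_tdeg: "lk m x \<le> tdeg m"
proof (cases "x \<in> ks m")
  case True thus ?thesis unfolding tdeg_def by (intro member_le_sum) auto
qed (simp add: in_ks)
lemma snd_le_gdeg: "x \<in> ks m \<Longrightarrow> snd x \<le> gdeg m"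
proof -
  assume x: "x \<in> ks m"
  have "snd x \<le> snd x * lk m x" using x by (simp add: in_ks)
  also have "\<dots> \<le> gdeg m" unfolding gdeg_def using x by (intro member_le_sum) auto
  finally show ?thesis .
qed
lemma gdeg0_iff: "gdeg m = 0 \<longleftrightarrow> (\<forall>x\<in>ks m. snd x = 0)"
  unfolding gdeg_def by (auto simp: in_ks)

lemma minus_add_ee: "1 \<le> lk m x \<Longrightarrow> m - ee x + ee x = m"
  by (rule mon_eqI) (auto simp: lk_single)
lemma minus_add_single[simp]: "k \<le> lk m x \<Longrightarrow> m - Poly_Mapping.single x k + Poly_Mapping.single x k = m"
  by (rule mon_eqI) (auto simp: lk_single)
lemma single_add_minus[simp]: "k \<le> lk m x \<Longrightarrow> Poly_Mapping.single x k + (m - Poly_Mapping.single x k) = m"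
  by (rule mon_eqI) (auto simp: lk_single)
lemma add_ee_minus[simp]: "m + ee x - ee x = m"
  by (rule mon_eqI) (auto simp: lk_single)
lemma add_ee_inj: "a + ee x = b + ee x \<longleftrightarrow> a = b"
  by simp

lemma fin_mons: "finite K \<Longrightarrow> finite {m::mon. ks m \<subseteq> K \<and> (\<forall>x. lk m x \<le> B)}"
proof -
  assume K: "finite K"
  let ?S = "{m::mon. ks m \<subseteq> K \<and> (\<forall>x. lk m x \<le> B)}"
  have "inj_on (\<lambda>m. restrict (lk m) K) ?S"
  proof (rule inj_onI)
    fix a b assume a: "a \<in> ?S" and b: "b \<in> ?S" and eq: "restrict (lk a) K = restrict (lk b) K"
    show "a = b"
    proof (rule mon_eqI)
      fix x show "lk a x = lk b x"
      proof (cases "x \<in> K")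
        case True thus ?thesis using eq by (metis restrict_apply')
      next
        case False hence "x \<notin> ks a" "x \<notin> ks b" using a b by auto
        thus ?thesis by (simp add: in_ks)
      qed
    qed
  qed
  moreover have "(\<lambda>m. restrict (lk m) K) ` ?S \<subseteq> PiE K (\<lambda>_. {..B})" by (auto simp: PiE_iff)
  moreover have "finite (PiE K (\<lambda>_. {..B}))" using K by (intro finite_PiE) auto
  ultimately show ?thesis by (meson finite_imageD finite_subset)
qed

definition Dset :: "mon \<Rightarrow> (mon \<times> mon) set" where "Dset \<mu> = {(a, b). a + b = \<mu>}"

lemma fin_Dset: "finite (Dset \<mu>)"
proof -
  have "fst ` Dset \<mu> \<subseteq> {m::mon. ks m \<subseteq> ks \<mu> \<and> (\<forall>x. lk m x \<le> tdeg \<mu>)}"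
  proof
    fix a assume "a \<in> fst ` Dset \<mu>"
    then obtain b where ab: "a + b = \<mu>" by (auto simp: Dset_def)
    have "\<forall>x. lk a x \<le> lk \<mu> x" using ab by auto
    hence "ks a \<subseteq> ks \<mu>" by (auto simp: in_ks) (metis le_zero_eq not_gr_zero)
    moreover have "\<forall>x. lk a x \<le> tdeg \<mu>" using \<open>\<forall>x. lk a x \<le> lk \<mu> x\<close> order.trans[OF _ lk_le_tdeg] by blast
    ultimately show "a \<in> {m::mon. ks m \<subseteq> ks \<mu> \<and> (\<forall>x. lk m x \<le> tdeg \<mu>)}" by blast
  qed
  hence "finite (fst ` Dset \<mu>)" using fin_mons[of "ks \<mu>" "tdeg \<mu>"] finite_subset by auto
  moreover have "inj_on fst (Dset \<mu>)"
    by (rule inj_onI) (auto simp: Dset_def)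
  ultimately show ?thesis using finite_image_iff by blast
qed

lemma ser_mult_D: "ser_mult f g \<mu> = (\<Sum>(a,b)\<in>Dset \<mu>. f a * g b)"
  by (simp add: ser_mult_def Dset_def)

lemma ser_mult_nz: "ser_mult f g \<mu> \<noteq> 0 \<Longrightarrow> \<exists>a b. a + b = \<mu> \<and> f a \<noteq> 0 \<and> g b \<noteq> 0"
  unfolding ser_mult_D by (smt (verit, best) Dset_def case_prodE mem_Collect_eq mult_zero_left mult_zero_right prod.simps(2) sum.neutral)

lemma sum_single_pt: "finite A \<Longrightarrow> p \<in> A \<Longrightarrow> (\<forall>q\<in>A. q \<noteq> p \<longrightarrow> h q = 0) \<Longrightarrow> sum h A = h p"
  by (metis (mono_tags, lifting) sum.remove sum.neutral DiffE insertCI add.right_neutral)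

lemma sum_none: "(\<forall>q\<in>A. h q = 0) \<Longrightarrow> sum h A = 0" by simp




lemma ser_mult_D': "ser_mult f g \<mu> = (\<Sum>p\<in>Dset \<mu>. f (fst p) * g (snd p))"
  by (simp add: ser_mult_D case_prod_beta)

lemma ser_mult_comm: "ser_mult f g = ser_mult g f"
proof (rule ext)
  fix \<mu>
  show "ser_mult f g \<mu> = ser_mult g f \<mu>"
    unfolding ser_mult_D'
    by (rule sum.reindex_bij_witness[where i=prod.swap and j=prod.swap])
       (auto simp: Dset_def add.commute)
qed

definition Tset :: "mon \<Rightarrow> (mon \<times> mon \<times> mon) set" where "Tset \<mu> = {(a,b,c). a + b + c = \<mu>}"

lemma assoc_L: "ser_mult (ser_mult f g) h \<mu> = (\<Sum>t\<in>Tset \<mu>. f (fst t) * g (fst (snd t)) * h (snd (snd t)))"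
proof -
  have "ser_mult (ser_mult f g) h \<mu> = (\<Sum>p\<in>Dset \<mu>. \<Sum>q\<in>Dset (fst p). f (fst q) * g (snd q) * h (snd p))"
    unfolding ser_mult_D' by (simp add: sum_distrib_right)
  also have "\<dots> = (\<Sum>(p,q)\<in>Sigma (Dset \<mu>) (\<lambda>p. Dset (fst p)). f (fst q) * g (snd q) * h (snd p))"
    by (rule sum.Sigma) (auto simp: fin_Dset)
  also have "\<dots> = (\<Sum>t\<in>Tset \<mu>. f (fst t) * g (fst (snd t)) * h (snd (snd t)))"
    by (rule sum.reindex_bij_witness[where i="\<lambda>(a,b,c). ((a+b, c), (a, b))" and j="\<lambda>((x,c),(a,b)). (a,b,c)"])
       (auto simp: Dset_def Tset_def)
  finally show ?thesis .
qed

lemma assoc_R: "ser_mult f (ser_mult g h) \<mu> = (\<Sum>t\<in>Tset \<mu>. f (fst t) * g (fst (snd t)) * h (snd (snd t)))"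
proof -
  have "ser_mult f (ser_mult g h) \<mu> = (\<Sum>p\<in>Dset \<mu>. \<Sum>q\<in>Dset (snd p). f (fst p) * g (fst q) * h (snd q))"
    unfolding ser_mult_D' by (simp add: sum_distrib_left mult.assoc)
  also have "\<dots> = (\<Sum>(p,q)\<in>Sigma (Dset \<mu>) (\<lambda>p. Dset (snd p)). f (fst p) * g (fst q) * h (snd q))"
    by (rule sum.Sigma) (auto simp: fin_Dset)
  also have "\<dots> = (\<Sum>t\<in>Tset \<mu>. f (fst t) * g (fst (snd t)) * h (snd (snd t)))"
    by (rule sum.reindex_bij_witness[where i="\<lambda>(a,b,c). ((a, b+c), (b, c))" and j="\<lambda>((a,x),(b,c)). (a,b,c)"])
       (auto simp: Dset_def Tset_def add.assoc)
  finally show ?thesis .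
qed

lemma ser_mult_assoc: "ser_mult (ser_mult f g) h = ser_mult f (ser_mult g h)"
  by (rule ext) (simp add: assoc_L assoc_R)

lemma ser_mult_one: "ser_mult ser_one g = g"
proof (rule ext)
  fix \<mu>
  have "ser_mult ser_one g \<mu> = (\<lambda>p. ser_one (fst p) * g (snd p)) (0, \<mu>)"
    unfolding ser_mult_D' by (rule sum_single_pt[OF fin_Dset]) (auto simp: Dset_def ser_one_def)
  thus "ser_mult ser_one g \<mu> = g \<mu>" by (simp add: ser_one_def)
qed

lemma ser_mult_one_right: "ser_mult g ser_one = g"
  using ser_mult_one ser_mult_comm by metis

interpretation sm: comm_monoid_list_set ser_mult ser_one
proof -
  interpret comm_monoid ser_mult ser_one
  proof
    fix a b c show "ser_mult (ser_mult a b) c = ser_mult a (ser_mult b c)" by (rule ser_mult_assoc)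
    show "ser_mult a b = ser_mult b a" by (rule ser_mult_comm)
    show "ser_mult a ser_one = a" by (rule ser_mult_one_right)
  qed
  show "comm_monoid_list_set ser_mult ser_one" by unfold_locales
qed

lemma ser_mult_var: "ser_mult (ser_var q) g \<mu> = (if 1 \<le> lk \<mu> q then g (\<mu> - ee q) else 0)"
proof (cases "1 \<le> lk \<mu> q")
  case True
  have "ser_mult (ser_var q) g \<mu> = (\<lambda>p. ser_var q (fst p) * g (snd p)) (ee q, \<mu> - ee q)"
    unfolding ser_mult_D'
  proof (rule sum_single_pt[OF fin_Dset])
    show "(ee q, \<mu> - ee q) \<in> Dset \<mu>" unfolding Dset_def using single_add_minus[OF True] by simp
    show "\<forall>p\<in>Dset \<mu>. p \<noteq> (ee q, \<mu> - ee q) \<longrightarrow> ser_var q (fst p) * g (snd p) = 0"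
      by (auto simp: Dset_def ser_var_def)
  qed
  thus ?thesis using True by (simp add: ser_var_def)
next
  case False
  have "\<forall>p\<in>Dset \<mu>. ser_var q (fst p) * g (snd p) = 0"
  proof
    fix p assume "p \<in> Dset \<mu>"
    hence "fst p + snd p = \<mu>" by (auto simp: Dset_def)
    hence "fst p \<noteq> ee q" using False by (metis le_add1 lk_add lk_single)
    thus "ser_var q (fst p) * g (snd p) = 0" by (simp add: ser_var_def)
  qed
  thus ?thesis using False unfolding ser_mult_D' by (simp del: mult_eq_0_iff)
qed

lemma ser_mult_lin: "ser_mult (\<lambda>m. a * f m + b * g m) h = (\<lambda>\<mu>. a * ser_mult f h \<mu> + b * ser_mult g h \<mu>)"
  by (rule ext) (simp add: ser_mult_D' sum_distrib_left sum.distrib algebra_simps)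

lemma ser_mult_cmul: "ser_mult (\<lambda>m. a * f m) h = (\<lambda>\<mu>. a * ser_mult f h \<mu>)"
  by (rule ext) (simp add: ser_mult_D' sum_distrib_left algebra_simps)

lemma ser_mult_add: "ser_mult (\<lambda>m. f m + g m) h = (\<lambda>\<mu>. ser_mult f h \<mu> + ser_mult g h \<mu>)"
  by (rule ext) (simp add: ser_mult_D' sum.distrib algebra_simps)

lemma pd_half: "(\<Sum>p\<in>Dset (\<mu> + ee x). of_nat (lk (fst p) x) * (f (fst p) * g (snd p)))
   = (\<Sum>p\<in>Dset \<mu>. of_nat (lk (fst p) x + 1) * f (fst p + ee x) * g (snd p))"
proof -
  let ?S = "{p\<in>Dset (\<mu> + ee x). 1 \<le> lk (fst p) x}"
  have "(\<Sum>p\<in>Dset (\<mu> + ee x). of_nat (lk (fst p) x) * (f (fst p) * g (snd p)))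
      = (\<Sum>p\<in>?S. of_nat (lk (fst p) x) * (f (fst p) * g (snd p)))"
    by (rule sum.mono_neutral_right) (auto simp: fin_Dset, metis Suc_leI neq0_conv of_nat_0 mult_zero_left)
  also have "\<dots> = (\<Sum>p\<in>Dset \<mu>. of_nat (lk (fst p) x + 1) * f (fst p + ee x) * g (snd p))"
  proof (rule sum.reindex_bij_witness[where j="\<lambda>p. (fst p - ee x, snd p)" and i="\<lambda>p. (fst p + ee x, snd p)"])
    fix p assume "p \<in> ?S"
    hence p: "fst p + snd p = \<mu> + ee x" "1 \<le> lk (fst p) x" by (auto simp: Dset_def)
    show "(fst (fst p - ee x, snd p) + ee x, snd (fst p - ee x, snd p)) = p"
      using p by (simp add: minus_add_ee)
    have "fst p - ee x + snd p + ee x = \<mu> + ee x" using p minus_add_ee[OF p(2)] by (simp add: algebra_simps)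
    thus "(fst p - ee x, snd p) \<in> Dset \<mu>" by (simp add: Dset_def)
    show "of_nat (lk (fst (fst p - ee x, snd p)) x + 1) * f (fst (fst p - ee x, snd p) + ee x) * g (snd (fst p - ee x, snd p))
          = of_nat (lk (fst p) x) * (f (fst p) * g (snd p))"
      using p by (simp add: lk_single mult.assoc)
  next
    fix p assume "p \<in> Dset \<mu>"
    thus "(fst (fst p + ee x, snd p) - ee x, snd (fst p + ee x, snd p)) = p" by simp
    show "(fst p + ee x, snd p) \<in> ?S" using \<open>p \<in> Dset \<mu>\<close> by (auto simp: Dset_def lk_single algebra_simps)
  qed
  finally show ?thesis .
qed

lemma ser_pd_leibniz: "ser_pd x (ser_mult f g) \<mu> = ser_mult (ser_pd x f) g \<mu> + ser_mult f (ser_pd x g) \<mu>"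
proof -
  have "ser_pd x (ser_mult f g) \<mu> = (\<Sum>p\<in>Dset (\<mu> + ee x). of_nat (lk (fst p) x + lk (snd p) x) * (f (fst p) * g (snd p)))"
  proof -
    have "\<forall>p\<in>Dset (\<mu> + ee x). lk (fst p) x + lk (snd p) x = lk \<mu> x + 1"
      by (auto simp: Dset_def lk_single dest: arg_cong[where f="\<lambda>m. lk m x"])
    thus ?thesis unfolding ser_pd_def ser_mult_D' by (simp add: sum_distrib_left)
  qed
  also have "\<dots> = (\<Sum>p\<in>Dset (\<mu> + ee x). of_nat (lk (fst p) x) * (f (fst p) * g (snd p)))
                 + (\<Sum>p\<in>Dset (\<mu> + ee x). of_nat (lk (snd p) x) * (g (snd p) * f (fst p)))"
    by (simp add: sum.distrib algebra_simps)
  also have "(\<Sum>p\<in>Dset (\<mu> + ee x). of_nat (lk (snd p) x) * (g (snd p) * f (fst p)))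
      = (\<Sum>p\<in>Dset (\<mu> + ee x). of_nat (lk (fst p) x) * (g (fst p) * f (snd p)))"
    by (rule sum.reindex_bij_witness[where i=prod.swap and j=prod.swap]) (auto simp: Dset_def add.commute)
  also have "\<dots> = (\<Sum>p\<in>Dset \<mu>. of_nat (lk (fst p) x + 1) * g (fst p + ee x) * f (snd p))"
    by (rule pd_half)
  also have "\<dots> = ser_mult f (ser_pd x g) \<mu>"
    unfolding ser_mult_comm[of f] ser_mult_D' ser_pd_def by (simp add: algebra_simps)
  also have "(\<Sum>p\<in>Dset (\<mu> + ee x). of_nat (lk (fst p) x) * (f (fst p) * g (snd p))) = ser_mult (ser_pd x f) g \<mu>"
    unfolding pd_half ser_mult_D' ser_pd_def by (simp add: algebra_simps)
  finally show ?thesis by simp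
qed

lemma eul_leibniz: "of_nat (tdeg \<mu>) * ser_mult f g \<mu>
   = ser_mult (\<lambda>m. of_nat (tdeg m) * f m) g \<mu> + ser_mult f (\<lambda>m. of_nat (tdeg m) * g m) \<mu>"
proof -
  have "\<forall>p\<in>Dset \<mu>. tdeg \<mu> = tdeg (fst p) + tdeg (snd p)" by (auto simp: Dset_def)
  thus ?thesis unfolding ser_mult_D' by (simp add: sum_distrib_left sum.distrib[symmetric] algebra_simps)
qed




lemma msubst_F: "msubst W m = sm.set.F (\<lambda>x. ser_pow (W x) (lk m x)) (ks m)"
proof -
  have "msubst W m = foldr ser_mult (map (\<lambda>x. ser_pow (W x) (lk m x)) (sorted_list_of_set (ks m))) ser_one"
    unfolding msubst_def foldr_map by (simp add: o_def)
  also have "\<dots> = sm.list.F (map (\<lambda>x. ser_pow (W x) (lk m x)) (sorted_list_of_set (ks m)))"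
    by (simp add: sm.list.eq_foldr)
  also have "\<dots> = sm.set.F (\<lambda>x. ser_pow (W x) (lk m x)) (set (sorted_list_of_set (ks m)))"
    by (rule sm.distinct_set_conv_list[symmetric]) simp
  finally show ?thesis by simp
qed

lemma msubst_sup: "finite K \<Longrightarrow> ks m \<subseteq> K \<Longrightarrow> msubst W m = sm.set.F (\<lambda>x. ser_pow (W x) (lk m x)) K"
  unfolding msubst_F by (rule sm.set.mono_neutral_left) (auto simp: in_ks)

lemma msubst_0: "msubst W 0 = ser_one"
  by (simp add: msubst_F)

lemma msubst_add_ee: "msubst W (m + ee x) = ser_mult (W x) (msubst W m)"
proof -
  let ?K = "insert x (ks m)"
  have k1: "ks (m + ee x) \<subseteq> ?K" using keys_add[of m "ee x"] by auto
  have "msubst W (m + ee x) = sm.set.F (\<lambda>y. ser_pow (W y) (lk (m + ee x) y)) ?K"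
    by (rule msubst_sup[OF _ k1]) simp
  also have "\<dots> = ser_mult (ser_pow (W x) (lk (m + ee x) x)) (sm.set.F (\<lambda>y. ser_pow (W y) (lk (m + ee x) y)) (?K - {x}))"
    by (rule sm.set.remove) auto
  also have "sm.set.F (\<lambda>y. ser_pow (W y) (lk (m + ee x) y)) (?K - {x}) = sm.set.F (\<lambda>y. ser_pow (W y) (lk m y)) (?K - {x})"
    by (rule sm.set.cong) (auto simp: lk_single)
  also have "ser_pow (W x) (lk (m + ee x) x) = ser_mult (W x) (ser_pow (W x) (lk m x))"
    by (simp add: lk_single)
  finally have 1: "msubst W (m + ee x) = ser_mult (ser_mult (W x) (ser_pow (W x) (lk m x))) (sm.set.F (\<lambda>y. ser_pow (W y) (lk m y)) (?K - {x}))" .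
  have "msubst W m = sm.set.F (\<lambda>y. ser_pow (W y) (lk m y)) ?K"
    by (rule msubst_sup) auto
  also have "\<dots> = ser_mult (ser_pow (W x) (lk m x)) (sm.set.F (\<lambda>y. ser_pow (W y) (lk m y)) (?K - {x}))"
    by (rule sm.set.remove) auto
  finally show ?thesis using 1 by (simp add: ser_mult_assoc)
qed

lemma mon_induct: "P 0 \<Longrightarrow> (\<And>m x. P m \<Longrightarrow> P (m + ee x)) \<Longrightarrow> P m"
proof (induction "tdeg m" arbitrary: m rule: less_induct)
  case less
  show ?case
  proof (cases "m = 0")
    case True thus ?thesis using less by simp
  next
    case False
    then obtain x where x: "x \<in> ks m" by (metis all_not_in_conv in_ks mon_eqI lookup_zero)
    hence x1: "1 \<le> lk m x" by (simp add: in_ks)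
    have eq: "m = (m - ee x) + ee x" using minus_add_single[OF x1] by simp
    have "tdeg (m - ee x) < tdeg m" using eq tdeg_add[of "m - ee x" "ee x"] by simp
    hence "P (m - ee x)" using less by blast
    hence "P ((m - ee x) + ee x)" using less by blast
    thus ?thesis using eq by simp
  qed
qed

definition vmon :: "nat \<Rightarrow> mon \<Rightarrow> bool" where "vmon N m \<longleftrightarrow> fst ` ks m \<subseteq> {1..N}"

definition Wgood :: "nat \<Rightarrow> (nat \<times> nat \<Rightarrow> ser) \<Rightarrow> bool" where
  "Wgood N W \<longleftrightarrow> (\<forall>x. fst x \<in> {1..N} \<longrightarrow> in_ideal (snd x) (W x)
      \<and> (\<forall>\<mu>. gdeg \<mu> = snd x \<longrightarrow> W x \<mu> = (if \<mu> = ee x then 1 else 0))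
      \<and> (\<forall>\<mu>. W x \<mu> \<noteq> 0 \<longrightarrow> 1 \<le> tdeg \<mu>))"

lemma vmon_add_ee: "vmon N (m + ee x) \<Longrightarrow> vmon N m \<and> fst x \<in> {1..N}"
proof -
  assume v: "vmon N (m + ee x)"
  have "ks m \<subseteq> ks (m + ee x)" "x \<in> ks (m + ee x)" by (auto simp: in_ks lk_single)
  thus ?thesis using v unfolding vmon_def by auto
qed

lemma delta_sum: "(\<Sum>p\<in>Dset \<mu>. if p = (a, b) then (1::complex) else 0) = (if \<mu> = a + b then 1 else 0)"
  using fin_Dset by (auto simp: Dset_def)

lemma msubst_props:
  assumes W: "Wgood N W"
  shows "vmon N m \<Longrightarrow> in_ideal (gdeg m) (msubst W m) \<and> (\<forall>\<mu>. gdeg \<mu> = gdeg m \<longrightarrow> msubst W m \<mu> = (if \<mu> = m then 1 else 0))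
        \<and> (\<forall>\<mu>. msubst W m \<mu> \<noteq> 0 \<longrightarrow> tdeg m \<le> tdeg \<mu>)"
proof (induction m rule: mon_induct)
  case 1
  show ?case by (auto simp: msubst_0 in_ideal_def ser_one_def tdeg_eq_0)
next
  case (2 m x)
  from vmon_add_ee[OF 2(2)] have vm: "vmon N m" and vx: "fst x \<in> {1..N}" by auto
  from 2(1)[OF vm] have IH: "in_ideal (gdeg m) (msubst W m)"
     "\<And>\<mu>. gdeg \<mu> = gdeg m \<Longrightarrow> msubst W m \<mu> = (if \<mu> = m then 1 else 0)"
     "\<And>\<mu>. msubst W m \<mu> \<noteq> 0 \<Longrightarrow> tdeg m \<le> tdeg \<mu>" by auto
  from W vx have Wx: "in_ideal (snd x) (W x)" "\<And>\<mu>. gdeg \<mu> = snd x \<Longrightarrow> W x \<mu> = (if \<mu> = ee x then 1 else 0)"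
     "\<And>\<mu>. W x \<mu> \<noteq> 0 \<Longrightarrow> 1 \<le> tdeg \<mu>" unfolding Wgood_def by blast+
  have ms: "msubst W (m + ee x) = ser_mult (W x) (msubst W m)" by (rule msubst_add_ee)
  have A: "in_ideal (gdeg (m + ee x)) (msubst W (m + ee x))"
    unfolding in_ideal_def ms
  proof (intro allI impI)
    fix \<mu> assume "ser_mult (W x) (msubst W m) \<mu> \<noteq> 0"
    then obtain a b where "a + b = \<mu>" "W x a \<noteq> 0" "msubst W m b \<noteq> 0" using ser_mult_nz by blast
    moreover have "snd x \<le> gdeg a" using Wx(1) \<open>W x a \<noteq> 0\<close> unfolding in_ideal_def by blast
    moreover have "gdeg m \<le> gdeg b" using IH(1) \<open>msubst W m b \<noteq> 0\<close> unfolding in_ideal_def by blast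
    ultimately show "gdeg (m + ee x) \<le> gdeg \<mu>" by auto
  qed
  have B: "\<forall>\<mu>. msubst W (m + ee x) \<mu> \<noteq> 0 \<longrightarrow> tdeg (m + ee x) \<le> tdeg \<mu>"
    unfolding ms
  proof (intro allI impI)
    fix \<mu> assume "ser_mult (W x) (msubst W m) \<mu> \<noteq> 0"
    then obtain a b where "a + b = \<mu>" "W x a \<noteq> 0" "msubst W m b \<noteq> 0" using ser_mult_nz by blast
    thus "tdeg (m + ee x) \<le> tdeg \<mu>" using Wx(3) IH(3) by fastforce
  qed
  have C: "\<forall>\<mu>. gdeg \<mu> = gdeg (m + ee x) \<longrightarrow> msubst W (m + ee x) \<mu> = (if \<mu> = m + ee x then 1 else 0)"
  proof (intro allI impI)
    fix \<mu> assume g: "gdeg \<mu> = gdeg (m + ee x)"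
    have "ser_mult (W x) (msubst W m) \<mu> = (\<Sum>p\<in>Dset \<mu>. if p = (ee x, m) then 1 else 0)"
      unfolding ser_mult_D'
    proof (rule sum.cong[OF refl])
      fix p assume p: "p \<in> Dset \<mu>"
      hence pa: "fst p + snd p = \<mu>" by (auto simp: Dset_def)
      show "W x (fst p) * msubst W m (snd p) = (if p = (ee x, m) then 1 else 0)"
      proof (cases "W x (fst p) \<noteq> 0 \<and> msubst W m (snd p) \<noteq> 0")
        case True
        have "snd x \<le> gdeg (fst p)" using Wx(1) True unfolding in_ideal_def by blast
        moreover have "gdeg m \<le> gdeg (snd p)" using IH(1) True unfolding in_ideal_def by blast
        moreover have "gdeg (fst p) + gdeg (snd p) = gdeg m + snd x" using g pa by auto
        ultimately have "gdeg (fst p) = snd x" "gdeg (snd p) = gdeg m" by auto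
        thus ?thesis using Wx(2) IH(2) by (cases p) auto
      next
        case False
        hence "p \<noteq> (ee x, m)" using Wx(2)[of "ee x"] IH(2)[of m] by auto
        thus ?thesis using False by auto
      qed
    qed
    also have "\<dots> = (if \<mu> = m + ee x then 1 else 0)" by (simp add: delta_sum add.commute)
    finally show "msubst W (m + ee x) \<mu> = (if \<mu> = m + ee x then 1 else 0)" using ms by simp
  qed
  show ?case using A B C by blast
qed




abbreviation "x11 \<equiv> (1::nat, 1::nat)"

definition Dc :: "ser \<Rightarrow> ser" where
  "Dc g = (\<lambda>\<mu>. of_nat (lk \<mu> x11 + 1) * g (\<mu> + ee x11) - of_nat (tdeg \<mu>) * g \<mu>)"

lemma Dc_pd: "Dc g \<mu> = ser_pd x11 g \<mu> - of_nat (tdeg \<mu>) * g \<mu>"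
  by (simp add: Dc_def ser_pd_def)

lemma ser_mult_diff: "ser_mult (\<lambda>m. f m - g m) h \<mu> = ser_mult f h \<mu> - ser_mult g h \<mu>"
  by (simp add: ser_mult_D' sum_subtractf[symmetric] algebra_simps)

lemma ser_mult_lin2: "ser_mult h (\<lambda>m. a * f m + b * g m) = (\<lambda>\<mu>. a * ser_mult h f \<mu> + b * ser_mult h g \<mu>)"
  using ser_mult_lin[of a f b g h] ser_mult_comm by metis

lemma Dc_leibniz: "Dc (ser_mult f g) \<mu> = ser_mult (Dc f) g \<mu> + ser_mult f (Dc g) \<mu>"
proof -
  have 1: "ser_mult (Dc f) g \<mu> = ser_mult (ser_pd x11 f) g \<mu> - ser_mult (\<lambda>m. of_nat (tdeg m) * f m) g \<mu>"
    unfolding Dc_pd[abs_def] by (rule ser_mult_diff)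
  have 2: "ser_mult f (Dc g) \<mu> = ser_mult f (ser_pd x11 g) \<mu> - ser_mult f (\<lambda>m. of_nat (tdeg m) * g m) \<mu>"
    using ser_mult_diff[of "ser_pd x11 g" "\<lambda>m. of_nat (tdeg m) * g m" f \<mu>] ser_mult_comm[of f]
    unfolding Dc_pd[abs_def] by (metis (no_types, lifting))
  show ?thesis unfolding 1 2 Dc_pd ser_pd_leibniz eul_leibniz by simp
qed

lemma add_ee_nz[simp]: "0 < (k::nat) \<Longrightarrow> (m::mon) + Poly_Mapping.single x k \<noteq> 0"
proof
  assume "0 < k" "m + Poly_Mapping.single x k = 0"
  hence "lk (m + Poly_Mapping.single x k) x = 0" by simp
  thus False using \<open>0 < k\<close> by (simp add: lk_single)
qed

lemma Dc_one: "Dc ser_one = (\<lambda>_. 0)"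
  by (rule ext) (auto simp: Dc_def ser_one_def)

definition WD :: "nat \<Rightarrow> (nat \<times> nat \<Rightarrow> ser) \<Rightarrow> bool" where
  "WD N W \<longleftrightarrow> (\<forall>x. fst x \<in> {1..N} \<longrightarrow> Dc (W x) = (\<lambda>\<mu>. of_nat (snd x) * W x \<mu> + (if x = x11 then ser_one \<mu> else 0)))"

lemma Dc_msubst:
  assumes W: "WD N W"
  shows "vmon N m \<Longrightarrow> Dc (msubst W m) = (\<lambda>\<mu>. of_nat (gdeg m) * msubst W m \<mu> + of_nat (lk m x11) * msubst W (m - ee x11) \<mu>)"
proof (induction m rule: mon_induct)
  case 1
  show ?case by (simp add: msubst_0 Dc_one)
next
  case (2 m x)
  from vmon_add_ee[OF 2(2)] have vm: "vmon N m" and vx: "fst x \<in> {1..N}" by auto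
  have IH: "Dc (msubst W m) = (\<lambda>\<mu>. of_nat (gdeg m) * msubst W m \<mu> + of_nat (lk m x11) * msubst W (m - ee x11) \<mu>)"
    using 2(1)[OF vm] .
  have Wx: "Dc (W x) = (\<lambda>\<mu>. of_nat (snd x) * W x \<mu> + (if x = x11 then 1 else 0) * ser_one \<mu>)"
  proof -
    have "Dc (W x) = (\<lambda>\<mu>. of_nat (snd x) * W x \<mu> + (if x = x11 then ser_one \<mu> else 0))"
      using W vx unfolding WD_def by blast
    thus ?thesis by (auto simp: fun_eq_iff)
  qed
  let ?M = "msubst W m" and ?M1 = "msubst W (m - ee x11)"
  have key: "of_nat (lk m x11) * msubst W (m - ee x11 + ee x) \<mu> = of_nat (lk m x11) * msubst W (m + ee x - ee x11) \<mu>" for \<mu>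
  proof (cases "lk m x11 = 0")
    case False
    hence "m + ee x - ee x11 = (m - ee x11) + ee x"
      by (intro mon_eqI) (auto simp: lk_single)
    thus ?thesis by simp
  qed simp
  show ?case
  proof (rule ext)
    fix \<mu>
    have "Dc (msubst W (m + ee x)) \<mu> = ser_mult (Dc (W x)) ?M \<mu> + ser_mult (W x) (Dc ?M) \<mu>"
      unfolding msubst_add_ee by (rule Dc_leibniz)
    also have "\<dots> = of_nat (snd x) * ser_mult (W x) ?M \<mu> + (if x = x11 then 1 else 0) * ser_mult ser_one ?M \<mu>
        + (of_nat (gdeg m) * ser_mult (W x) ?M \<mu> + of_nat (lk m x11) * ser_mult (W x) ?M1 \<mu>)"
      unfolding Wx IH ser_mult_lin ser_mult_lin2 by simp
    also have "\<dots> = of_nat (gdeg (m + ee x)) * msubst W (m + ee x) \<mu>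
        + ((if x = x11 then 1 else 0) * ?M \<mu> + of_nat (lk m x11) * msubst W (m + ee x - ee x11) \<mu>)"
      by (simp only: msubst_add_ee[symmetric] ser_mult_one key) (simp add: algebra_simps)
    also have "(if x = x11 then 1 else 0) * ?M \<mu> + of_nat (lk m x11) * msubst W (m + ee x - ee x11) \<mu>
        = of_nat (lk (m + ee x) x11) * msubst W (m + ee x - ee x11) \<mu>"
      by (cases "x = x11") (auto simp: lk_single algebra_simps)
    finally show "Dc (msubst W (m + ee x)) \<mu> = of_nat (gdeg (m + ee x)) * msubst W (m + ee x) \<mu>
        + of_nat (lk (m + ee x) x11) * msubst W (m + ee x - ee x11) \<mu>" .
  qed
qed

lemma fsum_sum: "finite B \<Longrightarrow> B \<subseteq> A \<Longrightarrow> (\<forall>i\<in>A - B. g i = 0) \<Longrightarrow> fsum g A = sum g B"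
  unfolding fsum_def by (rule sum.mono_neutral_left) auto

definition PhiW :: "(nat \<times> nat \<Rightarrow> ser) \<Rightarrow> ser \<Rightarrow> ser" where
  "PhiW W F = (\<lambda>\<mu>. fsum (\<lambda>m. F m * msubst W m \<mu>) UNIV)"

lemma Phi_PhiW: "Phi vt = PhiW (wt vt)"
  by (rule ext) (simp add: Phi_def PhiW_def)

definition Asup :: "nat \<Rightarrow> mon \<Rightarrow> mon set" where
  "Asup N \<mu> = {m. ks m \<subseteq> {1..N} \<times> {..gdeg \<mu>} \<and> (\<forall>x. lk m x \<le> tdeg \<mu>)}"

lemma fin_Asup: "finite (Asup N \<mu>)"
  unfolding Asup_def by (rule fin_mons) auto

lemma valid_vmon: "valid N F \<Longrightarrow> F m \<noteq> 0 \<Longrightarrow> vmon N m"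
  by (simp add: valid_def vmon_def)

lemma in_Asup:
  assumes W: "Wgood N W" and v: "vmon N m" and nz: "msubst W m \<mu> \<noteq> 0"
  shows "m \<in> Asup N \<mu>"
proof -
  from msubst_props[OF W v] nz have g: "gdeg m \<le> gdeg \<mu>" and t: "tdeg m \<le> tdeg \<mu>"
    unfolding in_ideal_def by auto
  have "ks m \<subseteq> {1..N} \<times> {..gdeg \<mu>}"
  proof
    fix x assume x: "x \<in> ks m"
    hence "fst x \<in> {1..N}" using v unfolding vmon_def by auto
    moreover have "snd x \<le> gdeg \<mu>" using snd_le_gdeg[OF x] g by simp
    ultimately show "x \<in> {1..N} \<times> {..gdeg \<mu>}" by (cases x) auto
  qed
  moreover have "\<forall>x. lk m x \<le> tdeg \<mu>" using lk_le_tdeg t order.trans by blast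
  ultimately show ?thesis unfolding Asup_def by blast
qed

lemma PhiW_sum:
  assumes W: "Wgood N W" and F: "valid N F" and B: "finite B" "Asup N \<mu> \<subseteq> B"
  shows "PhiW W F \<mu> = (\<Sum>m\<in>B. F m * msubst W m \<mu>)"
  unfolding PhiW_def
proof (rule fsum_sum[OF B(1)])
  show "\<forall>i\<in>UNIV - B. F i * msubst W i \<mu> = 0"
    using in_Asup[OF W valid_vmon[OF F]] B(2) by fastforce
qed auto

lemma PhiW_lin:
  assumes W: "Wgood N W" and F1: "valid N F1" and F2: "valid N F2"
  shows "PhiW W (\<lambda>m. a * F1 m + b * F2 m) \<mu> = a * PhiW W F1 \<mu> + b * PhiW W F2 \<mu>"
proof -
  have v: "valid N (\<lambda>m. a * F1 m + b * F2 m)"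
    using F1 F2 unfolding valid_def
    by (metis (no_types, lifting) add.right_neutral mult_zero_right)
  show ?thesis
    unfolding PhiW_sum[OF W v fin_Asup order.refl] PhiW_sum[OF W F1 fin_Asup order.refl] PhiW_sum[OF W F2 fin_Asup order.refl]
    by (simp add: sum_distrib_left sum.distrib algebra_simps)
qed

lemma PhiW_low:
  assumes W: "Wgood N W" and G: "valid N G" and low: "\<forall>m. gdeg m < g \<longrightarrow> G m = 0" and mu: "gdeg \<mu> \<le> g"
  shows "PhiW W G \<mu> = (if gdeg \<mu> = g then G \<mu> else 0)"
proof -
  have "PhiW W G \<mu> = (\<Sum>m\<in>insert \<mu> (Asup N \<mu>). G m * msubst W m \<mu>)"
    by (rule PhiW_sum[OF W G]) (auto simp: fin_Asup)
  also have "\<dots> = (\<Sum>m\<in>insert \<mu> (Asup N \<mu>). if m = \<mu> then (if gdeg \<mu> = g then G \<mu> else 0) else 0)"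
  proof (rule sum.cong[OF refl])
    fix m
    show "G m * msubst W m \<mu> = (if m = \<mu> then (if gdeg \<mu> = g then G \<mu> else 0) else 0)"
    proof (cases "G m * msubst W m \<mu> = 0")
      case False
      hence Gm: "G m \<noteq> 0" and Mm: "msubst W m \<mu> \<noteq> 0" by auto
      have vm: "vmon N m" using valid_vmon[OF G Gm] .
      have "g \<le> gdeg m" using low Gm by (meson not_le)
      moreover have "gdeg m \<le> gdeg \<mu>" using msubst_props[OF W vm] Mm unfolding in_ideal_def by auto
      ultimately have eq: "gdeg m = gdeg \<mu>" "gdeg \<mu> = g" using mu by auto
      hence "msubst W m \<mu> = (if \<mu> = m then 1 else 0)" using msubst_props[OF W vm] by auto
      thus ?thesis using eq Mm by auto
    next
      case True
      show ?thesis
      proof (cases "m = \<mu> \<and> gdeg \<mu> = g")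
        case c: True
        have vm: "vmon N \<mu> \<or> G \<mu> = 0" using valid_vmon[OF G] by blast
        hence "G \<mu> = 0"
          using True c msubst_props[OF W, of \<mu>] by auto
        thus ?thesis using c True by simp
      qed (use True in auto)
    qed
  qed
  also have "\<dots> = (if gdeg \<mu> = g then G \<mu> else 0)"
    by (simp add: fin_Asup)
  finally show ?thesis .
qed

lemma PhiW_inj:
  assumes W: "Wgood N W" and G: "valid N G" and z: "\<forall>\<mu>. PhiW W G \<mu> = 0"
  shows "G m = 0"
proof (rule ccontr)
  assume nz: "G m \<noteq> 0"
  define g where "g = (LEAST g. \<exists>m. gdeg m = g \<and> G m \<noteq> 0)"
  have ex: "\<exists>m. gdeg m = g \<and> G m \<noteq> 0" unfolding g_def by (rule LeastI[of _ "gdeg m"]) (use nz in auto)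
  then obtain m0 where m0: "gdeg m0 = g" "G m0 \<noteq> 0" by blast
  have low: "\<forall>m. gdeg m < g \<longrightarrow> G m = 0"
    unfolding g_def using not_less_Least by blast
  have "PhiW W G m0 = G m0" using PhiW_low[OF W G low] m0 by simp
  thus False using z m0 by simp
qed




definition EF :: "ser \<Rightarrow> ser" where
  "EF F = (\<lambda>m. of_nat (gdeg m) * F m + of_nat (lk m x11 + 1) * F (m + ee x11))"

lemma ks_sub_add: "ks m \<subseteq> ks (m + ee x)"
  by (auto simp: in_ks)
lemma ks_sub_minus: "ks (m - ee x) \<subseteq> ks m"
  by (auto simp: in_ks)

lemma valid_EF: "valid N F \<Longrightarrow> valid N (EF F)"
  unfolding valid_def EF_def
proof (intro allI impI)
  fix m assume "of_nat (gdeg m) * F m + of_nat (lk m x11 + 1) * F (m + ee x11) \<noteq> 0"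
  hence "F m \<noteq> 0 \<or> F (m + ee x11) \<noteq> 0" by auto
  moreover assume "\<forall>m. F m \<noteq> 0 \<longrightarrow> fst ` ks m \<subseteq> {1..N}"
  ultimately show "fst ` ks m \<subseteq> {1..N}" using ks_sub_add[of m x11] by blast
qed

lemma PhiW_D:
  assumes W: "Wgood N W" and WD: "WD N W" and F: "valid N F"
  shows "Dc (PhiW W F) \<mu> = PhiW W (EF F) \<mu>"
proof -
  let ?A = "Asup N \<mu>" and ?e = "\<lambda>m. m + ee x11"
  define B where "B = Asup N (\<mu> + ee x11) \<union> ?A \<union> ?e ` ?A"
  have fB: "finite B" unfolding B_def by (simp add: fin_Asup)
  have "Dc (PhiW W F) \<mu> = of_nat (lk \<mu> x11 + 1) * (\<Sum>m\<in>B. F m * msubst W m (\<mu> + ee x11))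
        - of_nat (tdeg \<mu>) * (\<Sum>m\<in>B. F m * msubst W m \<mu>)"
  proof -
    have 1: "PhiW W F (\<mu> + ee x11) = (\<Sum>m\<in>B. F m * msubst W m (\<mu> + ee x11))"
      by (rule PhiW_sum[OF W F fB]) (unfold B_def, blast)
    have 2: "PhiW W F \<mu> = (\<Sum>m\<in>B. F m * msubst W m \<mu>)"
      by (rule PhiW_sum[OF W F fB]) (unfold B_def, blast)
    show ?thesis unfolding Dc_def 1 2 by (rule refl)
  qed
  also have "\<dots> = (\<Sum>m\<in>B. F m * Dc (msubst W m) \<mu>)"
  proof -
    have "\<And>m. F m * Dc (msubst W m) \<mu> = of_nat (lk \<mu> x11 + 1) * (F m * msubst W m (\<mu> + ee x11)) - of_nat (tdeg \<mu>) * (F m * msubst W m \<mu>)"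
      by (simp add: Dc_def right_diff_distrib mult.left_commute)
    thus ?thesis by (simp only: sum_subtractf sum_distrib_left)
  qed
  also have "\<dots> = (\<Sum>m\<in>B. F m * of_nat (gdeg m) * msubst W m \<mu>) + (\<Sum>m\<in>B. F m * of_nat (lk m x11) * msubst W (m - ee x11) \<mu>)"
  proof -
    have "\<forall>m\<in>B. F m * Dc (msubst W m) \<mu> = F m * of_nat (gdeg m) * msubst W m \<mu> + F m * of_nat (lk m x11) * msubst W (m - ee x11) \<mu>"
    proof
      fix m assume "m \<in> B"
      show "F m * Dc (msubst W m) \<mu> = F m * of_nat (gdeg m) * msubst W m \<mu> + F m * of_nat (lk m x11) * msubst W (m - ee x11) \<mu>"
      proof (cases "F m = 0")
        case False
        thus ?thesis using Dc_msubst[OF WD valid_vmon[OF F False]] by (simp add: algebra_simps)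
      qed simp
    qed
    thus ?thesis by (simp add: sum.distrib)
  qed
  finally have S0: "Dc (PhiW W F) \<mu> = (\<Sum>m\<in>B. F m * of_nat (gdeg m) * msubst W m \<mu>) + (\<Sum>m\<in>B. F m * of_nat (lk m x11) * msubst W (m - ee x11) \<mu>)" .
  have S1: "(\<Sum>m\<in>B. F m * of_nat (gdeg m) * msubst W m \<mu>) = (\<Sum>m\<in>?A. F m * of_nat (gdeg m) * msubst W m \<mu>)"
  proof (rule sum.mono_neutral_right[OF fB])
    show "?A \<subseteq> B" unfolding B_def by auto
    show "\<forall>m\<in>B - ?A. F m * of_nat (gdeg m) * msubst W m \<mu> = 0"
    proof (rule ballI, rule ccontr)
      fix m assume m: "m \<in> B - ?A" and nz: "F m * of_nat (gdeg m) * msubst W m \<mu> \<noteq> 0"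
      hence Fm: "F m \<noteq> 0" and M: "msubst W m \<mu> \<noteq> 0" by auto
      have "m \<in> ?A" using in_Asup[OF W valid_vmon[OF F Fm] M] .
      thus False using m by blast
    qed
  qed
  have "(\<Sum>m\<in>B. F m * of_nat (lk m x11) * msubst W (m - ee x11) \<mu>) = (\<Sum>m\<in>?e ` ?A. F m * of_nat (lk m x11) * msubst W (m - ee x11) \<mu>)"
  proof (rule sum.mono_neutral_right[OF fB])
    show "?e ` ?A \<subseteq> B" unfolding B_def by auto
    show "\<forall>m\<in>B - ?e ` ?A. F m * of_nat (lk m x11) * msubst W (m - ee x11) \<mu> = 0"
    proof (rule ballI, rule ccontr)
      fix m assume m: "m \<in> B - ?e ` ?A" and nz: "F m * of_nat (lk m x11) * msubst W (m - ee x11) \<mu> \<noteq> 0"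
      hence Fm: "F m \<noteq> 0" and l: "lk m x11 \<noteq> 0" and M: "msubst W (m - ee x11) \<mu> \<noteq> 0" by auto
      have "vmon N (m - ee x11)" using valid_vmon[OF F Fm] ks_sub_minus[of m x11] unfolding vmon_def by (meson image_mono order.trans)
      hence "m - ee x11 \<in> ?A" by (rule in_Asup[OF W _ M])
      moreover have "m = ?e (m - ee x11)" using l minus_add_single[of 1 m x11] by simp
      ultimately show False using m by blast
    qed
  qed
  also have "\<dots> = (\<Sum>m\<in>?A. F (m + ee x11) * of_nat (lk m x11 + 1) * msubst W m \<mu>)"
    by (subst sum.reindex) (auto simp: inj_on_def lk_single)
  finally have S2: "(\<Sum>m\<in>B. F m * of_nat (lk m x11) * msubst W (m - ee x11) \<mu>) = (\<Sum>m\<in>?A. F (m + ee x11) * of_nat (lk m x11 + 1) * msubst W m \<mu>)" .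
  have S3: "(\<Sum>m\<in>?A. F m * of_nat (gdeg m) * msubst W m \<mu>) + (\<Sum>m\<in>?A. F (m + ee x11) * of_nat (lk m x11 + 1) * msubst W m \<mu>)
      = PhiW W (EF F) \<mu>"
  proof -
    have "PhiW W (EF F) \<mu> = (\<Sum>m\<in>?A. EF F m * msubst W m \<mu>)"
      by (rule PhiW_sum[OF W valid_EF[OF F] fin_Asup order.refl])
    thus ?thesis by (simp add: EF_def sum.distrib algebra_simps)
  qed
  show ?thesis using S0 S1 S2 S3 by simp
qed




definition Lc :: "nat \<Rightarrow> ser \<Rightarrow> ser" where
  "Lc N g = (\<lambda>\<mu>. fsum (\<lambda>p. ser_mult (ser_var (fst p, Suc (snd p))) (ser_pd p g) \<mu>) ({1..N} \<times> UNIV))"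

lemma opS_Lc: "opS N g \<mu> = ser_pd (1,0) g \<mu> - Lc N g \<mu>"
  by (simp add: opS_def Lc_def)

abbreviation qq :: "nat \<times> nat \<Rightarrow> nat \<times> nat" where "qq p \<equiv> (fst p, Suc (snd p))"

definition Sset :: "nat \<Rightarrow> mon \<Rightarrow> (nat \<times> nat) set" where
  "Sset N \<mu> = {p. fst p \<in> {1..N} \<and> qq p \<in> ks \<mu>}"

lemma fin_Sset: "finite (Sset N \<mu>)"
proof -
  have "Sset N \<mu> \<subseteq> (\<lambda>y. (fst y, snd y - 1)) ` ks \<mu>"
  proof
    fix p assume "p \<in> Sset N \<mu>"
    hence "qq p \<in> ks \<mu>" by (simp add: Sset_def)
    moreover have "p = (\<lambda>y. (fst y, snd y - 1)) (qq p)" by simp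
    ultimately show "p \<in> (\<lambda>y. (fst y, snd y - 1)) ` ks \<mu>" by (rule image_eqI[rotated])
  qed
  thus ?thesis by (rule finite_subset) simp
qed

lemma pd_at: "ser_pd p g \<nu> = of_nat (lk \<nu> p + 1) * g (\<nu> + ee p)"
  by (simp add: ser_pd_def)

lemma Lc_eq: "Lc N g \<mu> = (\<Sum>p\<in>Sset N \<mu>. ser_pd p g (\<mu> - ee (qq p)))"
proof -
  have "Lc N g \<mu> = (\<Sum>p\<in>Sset N \<mu>. ser_mult (ser_var (qq p)) (ser_pd p g) \<mu>)"
    unfolding Lc_def
  proof (rule fsum_sum[OF fin_Sset])
    show "Sset N \<mu> \<subseteq> {1..N} \<times> UNIV" by (auto simp: Sset_def)
    show "\<forall>i\<in>{1..N} \<times> UNIV - Sset N \<mu>. ser_mult (ser_var (qq i)) (ser_pd i g) \<mu> = 0"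
      by (auto simp: Sset_def ser_mult_var in_ks)
  qed
  also have "\<dots> = (\<Sum>p\<in>Sset N \<mu>. ser_pd p g (\<mu> - ee (qq p)))"
    by (rule sum.cong[OF refl]) (auto simp: Sset_def ser_mult_var in_ks)
  finally show ?thesis .
qed

lemma Lc_lin: "Lc N (\<lambda>\<nu>. a * f \<nu> + b * g \<nu>) \<mu> = a * Lc N f \<mu> + b * Lc N g \<mu>"
  unfolding Lc_eq by (simp add: pd_at sum.distrib sum_distrib_left algebra_simps)

lemma Lc_one: "Lc N ser_one \<mu> = 0"
  unfolding Lc_eq by (simp add: pd_at ser_one_def)

lemma gdeg_minus_ee: "1 \<le> lk \<mu> q \<Longrightarrow> gdeg (\<mu> - ee q) + snd q = gdeg \<mu>"
  using gdeg_add[of "\<mu> - ee q" "ee q"] minus_add_single[of 1 \<mu> q] by simp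

lemma Lc_ideal: "in_ideal j g \<Longrightarrow> in_ideal (Suc j) (Lc N g)"
  unfolding in_ideal_def
proof (intro allI impI)
  fix \<mu> assume g: "\<forall>m. g m \<noteq> 0 \<longrightarrow> j \<le> gdeg m" and nz: "Lc N g \<mu> \<noteq> 0"
  then obtain p where p: "p \<in> Sset N \<mu>" "ser_pd p g (\<mu> - ee (qq p)) \<noteq> 0"
    unfolding Lc_eq by (meson sum.neutral)
  hence "g (\<mu> - ee (qq p) + ee p) \<noteq> 0" by (simp add: pd_at)
  hence "j \<le> gdeg (\<mu> - ee (qq p) + ee p)" using g by blast
  moreover have "1 \<le> lk \<mu> (qq p)" using p(1) by (auto simp: Sset_def in_ks)
  ultimately show "Suc j \<le> gdeg \<mu>" using gdeg_minus_ee[of \<mu> "qq p"] by simp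
qed

lemma ee_eq_iff: "(\<nu>::mon) + ee p = ee x \<longleftrightarrow> p = x \<and> \<nu> = 0"
proof
  assume h: "\<nu> + ee p = ee x"
  hence "lk (\<nu> + ee p) p = lk (ee x) p" by simp
  hence px: "p = x" by (auto simp: lk_single split: if_splits)
  have "\<forall>y. lk \<nu> y = 0"
  proof
    fix y
    have "lk (\<nu> + ee p) y = lk (ee x) y" using h by simp
    thus "lk \<nu> y = 0" using px by (auto simp: lk_single split: if_splits)
  qed
  thus "p = x \<and> \<nu> = 0" using px by (auto intro: mon_eqI)
qed auto

lemma Lc_var: "\<alpha> \<in> {1..N} \<Longrightarrow> Lc N (ser_var (\<alpha>, k)) = ser_var (\<alpha>, Suc k)"
proof (rule ext)
  fix \<mu> assume a: "\<alpha> \<in> {1..N}"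
  have t: "ser_pd p (ser_var (\<alpha>, k)) \<nu> = (if p = (\<alpha>, k) \<and> \<nu> = 0 then 1 else 0)" for p \<nu>
    using ee_eq_iff[of \<nu> p "(\<alpha>, k)"] by (simp add: pd_at ser_var_def)
  show "Lc N (ser_var (\<alpha>, k)) \<mu> = ser_var (\<alpha>, Suc k) \<mu>"
  proof (cases "\<mu> = ee (\<alpha>, Suc k)")
    case True
    have "Lc N (ser_var (\<alpha>, k)) \<mu> = (\<Sum>p\<in>Sset N \<mu>. if p = (\<alpha>, k) then 1 else 0)"
      unfolding Lc_eq t by (rule sum.cong[OF refl]) (auto simp: True)
    also have "\<dots> = 1" using a True fin_Sset[of N \<mu>] by (simp add: Sset_def)
    finally show ?thesis using True by (simp add: ser_var_def)
  next
    case False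
    have "\<forall>p\<in>Sset N \<mu>. (if p = (\<alpha>, k) \<and> \<mu> - ee (qq p) = 0 then 1 else 0) = (0::complex)"
    proof
      fix p assume p: "p \<in> Sset N \<mu>"
      have "1 \<le> lk \<mu> (qq p)" using p by (auto simp: Sset_def in_ks)
      hence "\<mu> = \<mu> - ee (qq p) + ee (qq p)" by simp
      thus "(if p = (\<alpha>, k) \<and> \<mu> - ee (qq p) = 0 then 1 else 0) = (0::complex)" using False by auto
    qed
    thus ?thesis unfolding Lc_eq t using False by (simp add: ser_var_def)
  qed
qed

lemma Lc_comm: "Lc N (ser_pd (1,0) g) = ser_pd (1,0) (Lc N g)"
proof (rule ext)
  fix \<mu>
  let ?e = "ee (1::nat, 0::nat)"
  have S: "Sset N (\<mu> + ?e) = Sset N \<mu>"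
    unfolding Sset_def by (auto simp: in_ks lk_single)
  have "ser_pd (1,0) (Lc N g) \<mu> = of_nat (lk \<mu> (1,0) + 1) * (\<Sum>p\<in>Sset N \<mu>. ser_pd p g (\<mu> + ?e - ee (qq p)))"
    unfolding pd_at Lc_eq S by (rule refl)
  also have "\<dots> = (\<Sum>p\<in>Sset N \<mu>. ser_pd p (ser_pd (1,0) g) (\<mu> - ee (qq p)))"
    unfolding sum_distrib_left
  proof (rule sum.cong[OF refl])
    fix p assume p: "p \<in> Sset N \<mu>"
    hence l: "1 \<le> lk \<mu> (qq p)" by (auto simp: Sset_def in_ks)
    let ?\<nu> = "\<mu> - ee (qq p)"
    have e1: "\<mu> + ?e - ee (qq p) = ?\<nu> + ?e" by (rule mon_eqI) (use l in \<open>auto simp: lk_single\<close>)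
    have e2: "?\<nu> + ?e + ee p = ?\<nu> + ee p + ?e" by (simp add: algebra_simps)
    have l10: "lk ?\<nu> (1,0) = lk \<mu> (1,0)" by (auto simp: lk_single)
    show "of_nat (lk \<mu> (1,0) + 1) * ser_pd p g (\<mu> + ?e - ee (qq p)) = ser_pd p (ser_pd (1,0) g) ?\<nu>"
      unfolding e1 pd_at e2 using l10 by (cases "p = (1,0)") (auto simp: lk_single algebra_simps)
  qed
  also have "\<dots> = Lc N (ser_pd (1,0) g) \<mu>" by (simp add: Lc_eq)
  finally show "Lc N (ser_pd (1,0) g) \<mu> = ser_pd (1,0) (Lc N g) \<mu>" by simp
qed




abbreviation pd10 :: "ser \<Rightarrow> ser" where "pd10 \<equiv> ser_pd (1,0)"

lemma pd_lin: "ser_pd p (\<lambda>\<nu>. a * f \<nu> + b * g \<nu>) = (\<lambda>\<mu>. a * ser_pd p f \<mu> + b * ser_pd p g \<mu>)"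
  by (rule ext) (simp add: pd_at algebra_simps)

lemma pd_one: "ser_pd p ser_one = (\<lambda>_. 0)"
  by (rule ext) (simp add: pd_at ser_one_def)

lemma Lc_zero: "Lc N (\<lambda>_. 0) = (\<lambda>_. 0)"
  by (rule ext) (simp add: Lc_eq pd_at)

lemma Lc_lin': "Lc N (\<lambda>\<nu>. a * f \<nu> + b * g \<nu>) = (\<lambda>\<mu>. a * Lc N f \<mu> + b * Lc N g \<mu>)"
  by (rule ext) (rule Lc_lin)

lemma Lcn_lin: "(Lc N ^^ n) (\<lambda>\<nu>. a * f \<nu> + b * g \<nu>) = (\<lambda>\<mu>. a * (Lc N ^^ n) f \<mu> + b * (Lc N ^^ n) g \<mu>)"
  by (induction n) (simp_all add: Lc_lin')

lemma Lcn_one_Suc: "(Lc N ^^ Suc n) ser_one = (\<lambda>_. 0)"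
proof (induction n)
  case 0 thus ?case by (simp add: fun_eq_iff Lc_one)
next
  case (Suc n)
  have "(Lc N ^^ Suc (Suc n)) ser_one = Lc N ((Lc N ^^ Suc n) ser_one)" by simp
  thus ?case using Suc Lc_zero by simp
qed

lemma Lcn_one: "(Lc N ^^ n) ser_one = (if n = 0 then ser_one else (\<lambda>_. 0))"
  by (cases n) (simp_all only: Lcn_one_Suc, simp_all)

lemma Lcn_comm: "(Lc N ^^ n) (pd10 g) = pd10 ((Lc N ^^ n) g)"
  by (induction n) (simp_all only: funpow.simps comp_apply id_apply Lc_comm)

lemma pd10_n:
  assumes S: "pd10 v = (\<lambda>\<mu>. 1 * Lc N v \<mu> + c * ser_one \<mu>)"
  shows "(pd10 ^^ n) v = (\<lambda>\<mu>. 1 * (Lc N ^^ n) v \<mu> + (if n = 1 then c else 0) * ser_one \<mu>)"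
proof (induction n)
  case 0 thus ?case by simp
next
  case (Suc n)
  have "(pd10 ^^ Suc n) v = pd10 ((pd10 ^^ n) v)" by simp
  also have "\<dots> = (\<lambda>\<mu>. 1 * pd10 ((Lc N ^^ n) v) \<mu> + (if n = 1 then c else 0) * pd10 ser_one \<mu>)"
    unfolding Suc pd_lin ..
  also have "pd10 ((Lc N ^^ n) v) = (Lc N ^^ n) (pd10 v)" by (rule Lcn_comm[symmetric])
  also have "\<dots> = (\<lambda>\<mu>. 1 * (Lc N ^^ n) (Lc N v) \<mu> + c * (Lc N ^^ n) ser_one \<mu>)"
    unfolding S Lcn_lin ..
  also have "(Lc N ^^ n) (Lc N v) = (Lc N ^^ Suc n) v" by (simp add: funpow_swap1)
  finally show ?case by (auto simp: pd_one Lcn_one fun_eq_iff)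
qed

lemma Lcn_var: "\<alpha> \<in> {1..N} \<Longrightarrow> (Lc N ^^ n) (ser_var (\<alpha>, 0)) = ser_var (\<alpha>, n)"
  by (induction n) (simp_all add: Lc_var)

lemma Lcn_ideal: "in_ideal j g \<Longrightarrow> in_ideal (j + n) ((Lc N ^^ n) g)"
  by (induction n) (simp_all add: Lc_ideal)

lemma valid_pd10: "1 \<le> N \<Longrightarrow> valid N g \<Longrightarrow> valid N (pd10 g)"
  unfolding valid_def pd_at
proof (intro allI impI)
  fix m assume N: "1 \<le> N" and v: "\<forall>m. g m \<noteq> 0 \<longrightarrow> fst ` ks m \<subseteq> {1..N}"
    and nz: "of_nat (lk m (1, 0) + 1) * g (m + ee (1, 0)) \<noteq> 0"
  hence "fst ` ks (m + ee (1,0)) \<subseteq> {1..N}" by auto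
  thus "fst ` ks m \<subseteq> {1..N}" using ks_sub_add[of m "(1,0)"] by blast
qed

lemma opD_Dc: "valid N g \<Longrightarrow> opD N g = Dc g"
proof (rule ext)
  fix \<mu> assume v: "valid N g"
  have t: "ser_mult (ser_var p) (ser_pd p g) \<mu> = of_nat (lk \<mu> p) * g \<mu>" for p
  proof (cases "1 \<le> lk \<mu> p")
    case True
    have "lk (\<mu> - ee p) p + 1 = lk \<mu> p" using True by simp
    thus ?thesis using True by (simp add: ser_mult_var pd_at)
  qed (simp add: ser_mult_var)
  have "fsum (\<lambda>p. ser_mult (ser_var p) (ser_pd p g) \<mu>) ({1..N} \<times> UNIV) = of_nat (tdeg \<mu>) * g \<mu>"
  proof (cases "g \<mu> = 0")
    case True
    thus ?thesis unfolding t by (simp add: fsum_def)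
  next
    case False
    hence k: "ks \<mu> \<subseteq> {1..N} \<times> UNIV" using v unfolding valid_def by force
    have "fsum (\<lambda>p. of_nat (lk \<mu> p) * g \<mu>) ({1..N} \<times> UNIV) = (\<Sum>p\<in>ks \<mu>. of_nat (lk \<mu> p) * g \<mu>)"
      by (rule fsum_sum) (use k in \<open>auto simp: in_ks\<close>)
    thus ?thesis unfolding t by (simp add: tdeg_def sum_distrib_right)
  qed
  thus "opD N g \<mu> = Dc g \<mu>" by (simp add: opD_def Dc_pd)
qed

lemma Dc_pd10: "Dc (pd10 g) \<mu> = pd10 (Dc g) \<mu> + pd10 g \<mu>"
proof -
  have c: "\<mu> + ee (1,0) + ee x11 = \<mu> + ee x11 + ee (1,0)" by (simp add: algebra_simps)
  have l1: "lk (\<mu> + ee x11) (1,0) = lk \<mu> (1,0)" "lk (\<mu> + ee (1,0)) x11 = lk \<mu> x11" by (auto simp: lk_single)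
  have t: "tdeg (\<mu> + ee (1,0)) = tdeg \<mu> + 1" by simp
  show ?thesis unfolding Dc_def pd_at c l1 t by (simp add: algebra_simps)
qed

lemma Dc_n: "Dc v = (\<lambda>_. 0) \<Longrightarrow> Dc ((pd10 ^^ n) v) = (\<lambda>\<mu>. of_nat n * (pd10 ^^ n) v \<mu>)"
proof (induction n)
  case 0 thus ?case by simp
next
  case (Suc n)
  show ?case
  proof (rule ext)
    fix \<mu>
    have "Dc ((pd10 ^^ Suc n) v) \<mu> = pd10 (Dc ((pd10 ^^ n) v)) \<mu> + pd10 ((pd10 ^^ n) v) \<mu>"
      by (simp only: funpow.simps comp_apply Dc_pd10)
    also have "\<dots> = of_nat (Suc n) * (pd10 ^^ Suc n) v \<mu>"
      unfolding Suc.IH[OF Suc.prems] by (simp add: pd_at algebra_simps)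
    finally show "Dc ((pd10 ^^ Suc n) v) \<mu> = of_nat (Suc n) * (pd10 ^^ Suc n) v \<mu>" .
  qed
qed

lemma Dc_lin: "Dc (\<lambda>\<nu>. a * f \<nu> + b * g \<nu>) \<mu> = a * Dc f \<mu> + b * Dc g \<mu>"
  by (simp add: Dc_def algebra_simps)




locale VT =
  fixes N :: nat and vt :: "nat \<Rightarrow> ser"
  assumes N1: "1 \<le> N"
    and vt_valid: "\<forall>\<alpha>\<in>{1..N}. valid N (vt \<alpha>)"
    and vt_init: "\<forall>\<alpha>\<in>{1..N}. restr0 (vt \<alpha>) = ser_var (\<alpha>, 0)"
    and vt_S: "\<forall>\<alpha>\<in>{1..N}. opS N (vt \<alpha>) = (if \<alpha> = 1 then ser_one else ser_zero)"
    and vt_D: "\<forall>\<alpha>\<in>{1..N}. opD N (vt \<alpha>) = ser_zero"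
begin

definition r :: "nat \<Rightarrow> ser" where "r \<alpha> = (\<lambda>\<mu>. vt \<alpha> \<mu> - ser_var (\<alpha>, 0) \<mu>)"

lemma S_form: "\<alpha> \<in> {1..N} \<Longrightarrow> pd10 (vt \<alpha>) = (\<lambda>\<mu>. 1 * Lc N (vt \<alpha>) \<mu> + (if \<alpha> = 1 then 1 else 0) * ser_one \<mu>)"
proof (rule ext)
  fix \<mu> assume a: "\<alpha> \<in> {1..N}"
  have "opS N (vt \<alpha>) \<mu> = (if \<alpha> = 1 then ser_one else ser_zero) \<mu>" using vt_S a by simp
  thus "pd10 (vt \<alpha>) \<mu> = 1 * Lc N (vt \<alpha>) \<mu> + (if \<alpha> = 1 then 1 else 0) * ser_one \<mu>"
    unfolding opS_Lc by (auto simp: ser_zero_def algebra_simps)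
qed

lemma r_ideal: "\<alpha> \<in> {1..N} \<Longrightarrow> in_ideal 1 (r \<alpha>)"
  unfolding in_ideal_def
proof (intro allI impI)
  fix \<mu> assume a: "\<alpha> \<in> {1..N}" and nz: "r \<alpha> \<mu> \<noteq> 0"
  show "1 \<le> gdeg \<mu>"
  proof (rule ccontr)
    assume "\<not> 1 \<le> gdeg \<mu>"
    hence "gdeg \<mu> = 0" by simp
    hence "\<forall>x\<in>ks \<mu>. snd x = 0" by (simp add: gdeg0_iff)
    hence "vt \<alpha> \<mu> = restr0 (vt \<alpha>) \<mu>" by (simp add: restr0_def)
    also have "\<dots> = ser_var (\<alpha>, 0) \<mu>" using vt_init a by simp
    finally show False using nz by (simp add: r_def)
  qed
qed

lemma wt_form: "\<alpha> \<in> {1..N} \<Longrightarrow> wt vt (\<alpha>, n) = (\<lambda>\<mu>. ser_var (\<alpha>, n) \<mu> + (Lc N ^^ n) (r \<alpha>) \<mu>)"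
proof (rule ext)
  fix \<mu> assume a: "\<alpha> \<in> {1..N}"
  have p: "(pd10 ^^ n) (vt \<alpha>) = (\<lambda>\<mu>. 1 * (Lc N ^^ n) (vt \<alpha>) \<mu> + (if n = 1 then (if \<alpha> = 1 then 1 else 0) else 0) * ser_one \<mu>)"
    by (rule pd10_n[OF S_form[OF a]])
  have v: "vt \<alpha> = (\<lambda>\<mu>. 1 * ser_var (\<alpha>, 0) \<mu> + 1 * r \<alpha> \<mu>)" by (simp add: r_def fun_eq_iff)
  have l: "(Lc N ^^ n) (vt \<alpha>) \<mu> = ser_var (\<alpha>, n) \<mu> + (Lc N ^^ n) (r \<alpha>) \<mu>"
    by (subst v, subst Lcn_lin) (simp add: Lcn_var[OF a])
  show "wt vt (\<alpha>, n) \<mu> = ser_var (\<alpha>, n) \<mu> + (Lc N ^^ n) (r \<alpha>) \<mu>"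
    unfolding wt_def using p l by (auto simp: ser_one_def)
qed

lemma Wgood: "Wgood N (wt vt)"
  unfolding Wgood_def
proof (intro allI impI)
  fix x :: "nat \<times> nat" assume "fst x \<in> {1..N}"
  then obtain \<alpha> n where x: "x = (\<alpha>, n)" and a: "\<alpha> \<in> {1..N}" by (cases x) auto
  have I: "in_ideal (Suc n) ((Lc N ^^ n) (r \<alpha>))" using Lcn_ideal[OF r_ideal[OF a], of n N] by simp
  have w: "wt vt x = (\<lambda>\<mu>. ser_var (\<alpha>, n) \<mu> + (Lc N ^^ n) (r \<alpha>) \<mu>)" using wt_form[OF a] x by simp
  have A: "in_ideal (snd x) (wt vt x)"
    unfolding in_ideal_def w
  proof (intro allI impI)
    fix \<mu> assume "ser_var (\<alpha>, n) \<mu> + (Lc N ^^ n) (r \<alpha>) \<mu> \<noteq> 0"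
    hence "\<mu> = ee (\<alpha>, n) \<or> (Lc N ^^ n) (r \<alpha>) \<mu> \<noteq> 0" by (auto simp: ser_var_def split: if_splits)
    thus "snd x \<le> gdeg \<mu>" using I x unfolding in_ideal_def by fastforce
  qed
  have B: "\<forall>\<mu>. gdeg \<mu> = snd x \<longrightarrow> wt vt x \<mu> = (if \<mu> = ee x then 1 else 0)"
  proof (intro allI impI)
    fix \<mu> assume g: "gdeg \<mu> = snd x"
    hence "(Lc N ^^ n) (r \<alpha>) \<mu> = 0" using I x unfolding in_ideal_def by fastforce
    thus "wt vt x \<mu> = (if \<mu> = ee x then 1 else 0)" unfolding w using x by (simp add: ser_var_def)
  qed
  have C: "\<forall>\<mu>. wt vt x \<mu> \<noteq> 0 \<longrightarrow> 1 \<le> tdeg \<mu>"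
  proof (intro allI impI)
    fix \<mu> assume "wt vt x \<mu> \<noteq> 0"
    hence "\<mu> = ee (\<alpha>, n) \<or> (Lc N ^^ n) (r \<alpha>) \<mu> \<noteq> 0" unfolding w by (auto simp: ser_var_def split: if_splits)
    moreover have "(Lc N ^^ n) (r \<alpha>) \<mu> \<noteq> 0 \<Longrightarrow> \<mu> \<noteq> 0" using I unfolding in_ideal_def by fastforce
    moreover have "ee (\<alpha>, n) \<noteq> 0" using add_ee_nz[of 1 0 "(\<alpha>, n)"] by simp
    ultimately have "\<mu> \<noteq> 0" by auto
    thus "1 \<le> tdeg \<mu>" using tdeg_eq_0[of \<mu>] by simp
  qed
  show "in_ideal (snd x) (wt vt x) \<and> (\<forall>\<mu>. gdeg \<mu> = snd x \<longrightarrow> wt vt x \<mu> = (if \<mu> = ee x then 1 else 0))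
        \<and> (\<forall>\<mu>. wt vt x \<mu> \<noteq> 0 \<longrightarrow> 1 \<le> tdeg \<mu>)" using A B C by blast
qed

lemma valid_pd10n: "valid N g \<Longrightarrow> valid N ((pd10 ^^ n) g)"
proof (induction n)
  case (Suc n)
  show ?case unfolding funpow.simps comp_apply by (rule valid_pd10[OF N1 Suc.IH[OF Suc.prems]])
qed simp

lemma WD: "WD N (wt vt)"
  unfolding WD_def
proof (intro allI impI)
  fix x :: "nat \<times> nat" assume "fst x \<in> {1..N}"
  then obtain \<alpha> n where x: "x = (\<alpha>, n)" and a: "\<alpha> \<in> {1..N}" by (cases x) auto
  let ?v = "(pd10 ^^ n) (vt \<alpha>)" and ?c = "if x = x11 then 1 else (0::complex)"
  have w: "wt vt x = (\<lambda>\<mu>. 1 * ?v \<mu> + (- ?c) * ser_one \<mu>)"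
    by (rule ext) (simp add: wt_def x ser_one_def)
  have D0: "Dc (vt \<alpha>) = (\<lambda>_. 0)"
    using opD_Dc[of N "vt \<alpha>"] vt_valid vt_D a by (simp add: ser_zero_def)
  show "Dc (wt vt x) = (\<lambda>\<mu>. of_nat (snd x) * wt vt x \<mu> + (if x = x11 then ser_one \<mu> else 0))"
  proof (rule ext)
    fix \<mu>
    have "Dc (wt vt x) \<mu> = Dc ?v \<mu>" unfolding w Dc_lin Dc_one by simp
    also have "\<dots> = of_nat n * ?v \<mu>" using Dc_n[OF D0] by simp
    also have "\<dots> = of_nat (snd x) * wt vt x \<mu> + (if x = x11 then ser_one \<mu> else 0)"
      unfolding w using x by (auto simp: algebra_simps)
    finally show "Dc (wt vt x) \<mu> = of_nat (snd x) * wt vt x \<mu> + (if x = x11 then ser_one \<mu> else 0)" .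
  qed
qed

end




lemma fsum_single: "i0 \<in> A \<Longrightarrow> (\<forall>i\<in>A. i \<noteq> i0 \<longrightarrow> g i = 0) \<Longrightarrow> fsum g A = g i0"
proof -
  assume i0: "i0 \<in> A" and z: "\<forall>i\<in>A. i \<noteq> i0 \<longrightarrow> g i = 0"
  show ?thesis
  proof (cases "g i0 = 0")
    case True
    hence "{i\<in>A. g i \<noteq> 0} = {}" using z by auto
    thus ?thesis using True by (simp add: fsum_def)
  next
    case False
    hence "{i\<in>A. g i \<noteq> 0} = {i0}" using z i0 by auto
    thus ?thesis by (simp add: fsum_def)
  qed
qed

lemma fsum_zero: "\<forall>i\<in>A. g i = 0 \<Longrightarrow> fsum g A = 0"
  by (simp add: fsum_def)

definition strip :: "mon \<Rightarrow> mon" where "strip \<mu> = \<mu> - Poly_Mapping.single x11 (lk \<mu> x11)"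

lemma strip_lk: "lk (strip \<mu>) x11 = 0"
  by (simp add: strip_def lk_single)
lemma strip_add: "strip \<mu> + Poly_Mapping.single x11 (lk \<mu> x11) = \<mu>"
  unfolding strip_def by (rule minus_add_single) simp
lemma gdeg_strip: "gdeg \<mu> = gdeg (strip \<mu>) + lk \<mu> x11"
proof -
  have "gdeg (strip \<mu> + Poly_Mapping.single x11 (lk \<mu> x11)) = gdeg (strip \<mu>) + lk \<mu> x11" by simp
  thus ?thesis unfolding strip_add .
qed

lemma vx_pow_single: "vx_pow i (Poly_Mapping.single x11 k) = (of_int i gchoose k)"
  by (simp add: vx_pow_def lk_single)

lemma prod_vx:
  assumes P: "\<forall>a. P a \<noteq> 0 \<longrightarrow> lk a x11 = 0"
  shows "ser_mult P (vx_pow i) \<mu> = P (strip \<mu>) * (of_int i gchoose lk \<mu> x11)"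
proof -
  let ?p0 = "(strip \<mu>, Poly_Mapping.single x11 (lk \<mu> x11))"
  have "ser_mult P (vx_pow i) \<mu> = (\<lambda>p. P (fst p) * vx_pow i (snd p)) ?p0"
    unfolding ser_mult_D'
  proof (rule sum_single_pt[OF fin_Dset])
    show "?p0 \<in> Dset \<mu>" using strip_add by (simp add: Dset_def)
    show "\<forall>p\<in>Dset \<mu>. p \<noteq> ?p0 \<longrightarrow> P (fst p) * vx_pow i (snd p) = 0"
    proof (intro ballI impI)
      fix p assume p: "p \<in> Dset \<mu>" and ne: "p \<noteq> ?p0"
      obtain a b where ab: "p = (a, b)" by (cases p)
      have s: "a + b = \<mu>" using p ab by (simp add: Dset_def)
      show "P (fst p) * vx_pow i (snd p) = 0"
      proof (rule ccontr)
        assume nz: "P (fst p) * vx_pow i (snd p) \<noteq> 0"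
        hence Pa: "P a \<noteq> 0" and vb: "vx_pow i b \<noteq> 0" using ab by auto
        have la: "lk a x11 = 0" using P Pa by blast
        have kb: "ks b \<subseteq> {x11}" using vb by (simp add: vx_pow_def split: if_splits)
        have bl: "lk b x11 = lk \<mu> x11" using s la by auto
        have b: "b = Poly_Mapping.single x11 (lk \<mu> x11)"
        proof (rule mon_eqI)
          fix y show "lk b y = lk (Poly_Mapping.single x11 (lk \<mu> x11)) y"
            using kb bl by (cases "y = x11") (auto simp: lk_single in_ks)
        qed
        have "a = strip \<mu>"
        proof (rule mon_eqI)
          fix y
          have "lk \<mu> y = lk a y + lk b y" using s by auto
          thus "lk a y = lk (strip \<mu>) y"
            using b la by (cases "y = x11") (auto simp: strip_def lk_single)
        qed
        thus False using ne ab b by simp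
      qed
    qed
  qed
  thus ?thesis using vx_pow_single[of i "lk \<mu> x11"] by simp
qed

context VT
begin

lemma main:
  fixes f F :: ser and d :: int
  assumes f_valid: "valid N f"
    and f_D: "opD N f = (\<lambda>m. of_int d * f m)"
    and F_valid: "valid N F"
    and F_pre: "Phi vt F = f"
  shows "Art N d F
    \<and> (\<forall>(k::nat) (h::nat \<Rightarrow> ser).
          in_ideal k f \<and> (\<forall>i\<ge>k. homog i (h i)) \<and> f = (\<lambda>m. fsum (\<lambda>i. h i m) {k..})
          \<longrightarrow> (\<exists>P::nat \<Rightarrow> ser.
                 (\<forall>i\<ge>k. Av_deg N (int i) (P i) \<and> ser_pd (1, 1) (P i) = ser_zero)
               \<and> F = (\<lambda>\<mu>. fsum (\<lambda>i. ser_mult (P i) (vx_pow (d - int i)) \<mu>) {k..})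
               \<and> P k = h k))"
proof -
  let ?W = "wt vt"
  have W: "Wgood N ?W" by (rule Wgood)
  have WDW: "WD N ?W" by (rule WD)
  have fP: "PhiW ?W F = f" using F_pre by (simp add: Phi_PhiW)
  have EFd: "EF F m = of_int d * F m" for m
  proof -
    let ?G = "\<lambda>m. 1 * EF F m + (- of_int d) * F m"
    have vG: "valid N ?G" using valid_EF[OF F_valid] F_valid unfolding valid_def
      by (metis (no_types, lifting) add.right_neutral mult_zero_right)
    have "\<forall>\<mu>. PhiW ?W ?G \<mu> = 0"
    proof
      fix \<mu>
      have "PhiW ?W ?G \<mu> = PhiW ?W (EF F) \<mu> - of_int d * PhiW ?W F \<mu>"
        using PhiW_lin[OF W valid_EF[OF F_valid] F_valid, of 1 "- of_int d" \<mu>] by simp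
      also have "PhiW ?W (EF F) \<mu> = Dc f \<mu>" using PhiW_D[OF W WDW F_valid] fP by simp
      also have "Dc f \<mu> = of_int d * f \<mu>" using opD_Dc[OF f_valid] f_D by metis
      finally show "PhiW ?W ?G \<mu> = 0" using fP by simp
    qed
    hence "?G m = 0" by (rule PhiW_inj[OF W vG])
    thus ?thesis by simp
  qed
  have rec: "of_nat (lk m x11 + 1) * F (m + ee x11) = (of_int d - of_nat (gdeg m)) * F m" for m
    using EFd[of m] unfolding EF_def by (simp add: algebra_simps)
  have binom: "lk m x11 = 0 \<Longrightarrow> F (m + Poly_Mapping.single x11 j) = ((of_int d - of_nat (gdeg m)) gchoose j) * F m" for m j
  proof (induction j)
    case 0 thus ?case by simp
  next
    case (Suc j)
    let ?a = "of_int d - of_nat (gdeg m) :: complex"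
    let ?m' = "m + Poly_Mapping.single x11 j"
    have e: "m + Poly_Mapping.single x11 (Suc j) = ?m' + ee x11"
      by (rule mon_eqI) (simp add: lk_single)
    have l: "lk ?m' x11 = j" using Suc.prems by (simp add: lk_single)
    have g: "gdeg ?m' = gdeg m + j" by simp
    have "of_nat (lk ?m' x11 + 1) * F (?m' + ee x11) = (of_int d - of_nat (gdeg ?m')) * F ?m'" by (rule rec)
    hence r0: "of_nat (Suc j) * F (?m' + ee x11) = (of_int d - of_nat (gdeg ?m')) * F ?m'" unfolding l by simp
    have "(of_int d - of_nat (gdeg ?m') :: complex) = ?a - of_nat j" unfolding g by simp
    hence r1: "of_nat (Suc j) * F (?m' + ee x11) = (?a - of_nat j) * ((?a gchoose j) * F m)"
      using r0 unfolding Suc.IH[OF Suc.prems] by simp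
    have r2: "of_nat (Suc j) * (?a gchoose Suc j) = (?a - of_nat j) * (?a gchoose j)"
      using gbinomial_mult_1[of ?a j] by (simp add: algebra_simps)
    have X: "of_nat (Suc j) * ((?a gchoose Suc j) * F m) = (?a - of_nat j) * ((?a gchoose j) * F m)"
      by (simp only: mult.assoc[symmetric] r2)
    have "of_nat (Suc j) * F (?m' + ee x11) = of_nat (Suc j) * ((?a gchoose Suc j) * F m)"
      by (simp only: r1 X)
    hence "F (?m' + ee x11) = (?a gchoose Suc j) * F m"
      by (metis mult_cancel_left of_nat_eq_0_iff nat.distinct(1))
    thus ?case using e by simp
  qed
  have decomp: "F \<mu> = ((of_int d - of_nat (gdeg (strip \<mu>))) gchoose lk \<mu> x11) * F (strip \<mu>)" for \<mu>
    using binom[OF strip_lk, of \<mu> "lk \<mu> x11"] strip_add[of \<mu>] by simp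
  define Pint where "Pint i = (\<lambda>m. if int (gdeg m) = d - i \<and> lk m x11 = 0 then F m else 0)" for i
  have part1: "Art N d F"
    unfolding Art_def
  proof (intro exI conjI)
    show "\<forall>i\<le>d. Av_deg N (d - i) (Pint i) \<and> ser_pd (1, 1) (Pint i) = ser_zero"
    proof (intro allI impI conjI)
      fix i
      show "Av_deg N (d - i) (Pint i)"
        using F_valid unfolding Av_deg_def valid_def Pint_def by auto
      show "ser_pd (1, 1) (Pint i) = ser_zero"
        by (rule ext) (simp add: pd_at Pint_def ser_zero_def lk_single)
    qed
    show "F = (\<lambda>\<mu>. fsum (\<lambda>i. ser_mult (Pint i) (vx_pow i) \<mu>) {..d})"
    proof (rule ext)
      fix \<mu>
      let ?i0 = "d - int (gdeg (strip \<mu>))"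
      have t: "ser_mult (Pint i) (vx_pow i) \<mu> = Pint i (strip \<mu>) * (of_int i gchoose lk \<mu> x11)" for i
        by (rule prod_vx) (simp add: Pint_def)
      have "fsum (\<lambda>i. ser_mult (Pint i) (vx_pow i) \<mu>) {..d} = ser_mult (Pint ?i0) (vx_pow ?i0) \<mu>"
        by (rule fsum_single) (unfold t, auto simp: Pint_def)
      also have "\<dots> = F (strip \<mu>) * (of_int ?i0 gchoose lk \<mu> x11)"
        unfolding t using strip_lk[of \<mu>] by (simp add: Pint_def)
      also have "\<dots> = F \<mu>" using decomp[of \<mu>] by simp
      finally show "F \<mu> = fsum (\<lambda>i. ser_mult (Pint i) (vx_pow i) \<mu>) {..d}" by simp
    qed
  qed
  have part2: "in_ideal k f \<and> (\<forall>i\<ge>k. homog i (h i)) \<and> f = (\<lambda>m. fsum (\<lambda>i. h i m) {k..})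
          \<longrightarrow> (\<exists>P::nat \<Rightarrow> ser.
                 (\<forall>i\<ge>k. Av_deg N (int i) (P i) \<and> ser_pd (1, 1) (P i) = ser_zero)
               \<and> F = (\<lambda>\<mu>. fsum (\<lambda>i. ser_mult (P i) (vx_pow (d - int i)) \<mu>) {k..})
               \<and> P k = h k)" for k h
  proof (intro impI)
    assume H: "in_ideal k f \<and> (\<forall>i\<ge>k. homog i (h i)) \<and> f = (\<lambda>m. fsum (\<lambda>i. h i m) {k..})"
    hence fk: "in_ideal k f" and hom: "\<forall>i\<ge>k. homog i (h i)" and fh: "f = (\<lambda>m. fsum (\<lambda>i. h i m) {k..})" by auto
    have van: "\<forall>m. gdeg m < g \<longrightarrow> F m = 0" if "g \<le> k" for g
      using that
    proof (induction g)
      case 0 thus ?case by simp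
    next
      case (Suc g)
      have low: "\<forall>m. gdeg m < g \<longrightarrow> F m = 0" using Suc by simp
      show ?case
      proof (intro allI impI)
        fix m assume "gdeg m < Suc g"
        show "F m = 0"
        proof (cases "gdeg m < g")
          case True thus ?thesis using low by blast
        next
          case False
          hence gm: "gdeg m = g" using \<open>gdeg m < Suc g\<close> by simp
          have "PhiW ?W F m = F m" using PhiW_low[OF W F_valid low] gm by simp
          moreover have "f m = 0" using fk gm Suc.prems unfolding in_ideal_def by fastforce
          ultimately show ?thesis using fP by simp
        qed
      qed
    qed
    have vanK: "\<forall>m. gdeg m < k \<longrightarrow> F m = 0" using van[of k] by simp
    define P where "P i = (\<lambda>m. if gdeg m = i \<and> lk m x11 = 0 then F m else 0)" for i
    show "\<exists>P::nat \<Rightarrow> ser.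
                 (\<forall>i\<ge>k. Av_deg N (int i) (P i) \<and> ser_pd (1, 1) (P i) = ser_zero)
               \<and> F = (\<lambda>\<mu>. fsum (\<lambda>i. ser_mult (P i) (vx_pow (d - int i)) \<mu>) {k..})
               \<and> P k = h k"
    proof (intro exI conjI)
      show "\<forall>i\<ge>k. Av_deg N (int i) (P i) \<and> ser_pd (1, 1) (P i) = ser_zero"
      proof (intro allI impI conjI)
        fix i
        show "Av_deg N (int i) (P i)"
          using F_valid unfolding Av_deg_def valid_def P_def by auto
        show "ser_pd (1, 1) (P i) = ser_zero"
          by (rule ext) (simp add: pd_at P_def ser_zero_def lk_single)
      qed
      show "F = (\<lambda>\<mu>. fsum (\<lambda>i. ser_mult (P i) (vx_pow (d - int i)) \<mu>) {k..})"
      proof (rule ext)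
        fix \<mu>
        let ?i0 = "gdeg (strip \<mu>)"
        have t: "ser_mult (P i) (vx_pow (d - int i)) \<mu> = P i (strip \<mu>) * (of_int (d - int i) gchoose lk \<mu> x11)" for i
          by (rule prod_vx) (simp add: P_def)
        show "F \<mu> = fsum (\<lambda>i. ser_mult (P i) (vx_pow (d - int i)) \<mu>) {k..}"
        proof (cases "k \<le> ?i0")
          case True
          have "fsum (\<lambda>i. ser_mult (P i) (vx_pow (d - int i)) \<mu>) {k..} = ser_mult (P ?i0) (vx_pow (d - int ?i0)) \<mu>"
            by (rule fsum_single) (unfold t, use True in \<open>auto simp: P_def\<close>)
          also have "\<dots> = F (strip \<mu>) * (of_int (d - int ?i0) gchoose lk \<mu> x11)"
            unfolding t using strip_lk[of \<mu>] by (simp add: P_def)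
          also have "\<dots> = F \<mu>" using decomp[of \<mu>] by simp
          finally show ?thesis by simp
        next
          case False
          have "fsum (\<lambda>i. ser_mult (P i) (vx_pow (d - int i)) \<mu>) {k..} = 0"
            by (rule fsum_zero) (unfold t, use False in \<open>auto simp: P_def\<close>)
          moreover have "F \<mu> = 0" using decomp[of \<mu>] vanK False by simp
          ultimately show ?thesis by simp
        qed
      qed
      show "P k = h k"
      proof (rule ext)
        fix m
        show "P k m = h k m"
        proof (cases "gdeg m = k")
          case False
          hence "h k m = 0" using hom unfolding homog_def by auto
          thus ?thesis using False by (simp add: P_def)
        next
          case True
          have hf: "f m = h k m"
            unfolding fh
          proof (rule fsum_single)
            show "\<forall>i\<in>{k..}. i \<noteq> k \<longrightarrow> h i m = 0" using hom True unfolding homog_def by auto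
          qed simp
          have "PhiW ?W F m = F m" using PhiW_low[OF W F_valid vanK] True by simp
          hence Ff: "F m = f m" using fP by simp
          show ?thesis
          proof (cases "lk m x11 = 0")
            case True2: True
            thus ?thesis using True Ff hf by (simp add: P_def)
          next
            case False
            have "gdeg (strip m) < k" using gdeg_strip[of m] True False by simp
            hence "F m = 0" using decomp[of m] vanK by simp
            thus ?thesis using Ff hf False by (simp add: P_def)
          qed
        qed
      qed
    qed
  qed
  show ?thesis using part1 part2 by blast
qed

end


theorem lemma4p5:
  fixes N :: nat and vt :: "nat \<Rightarrow> ser" and f F :: ser and d :: int
  assumes N1: "1 \<le> N"
    and vt_valid: "\<forall>\<alpha>\<in>{1..N}. valid N (vt \<alpha>)"
    and vt_init: "\<forall>\<alpha>\<in>{1..N}. restr0 (vt \<alpha>) = ser_var (\<alpha>, 0)"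
    and vt_S: "\<forall>\<alpha>\<in>{1..N}. opS N (vt \<alpha>) = (if \<alpha> = 1 then ser_one else ser_zero)"
    and vt_D: "\<forall>\<alpha>\<in>{1..N}. opD N (vt \<alpha>) = ser_zero"
    and f_valid: "valid N f"
    and f_D: "opD N f = (\<lambda>m. of_int d * f m)"
    and F_valid: "valid N F"
    and F_pre: "Phi vt F = f"
  shows "Art N d F
    \<and> (\<forall>(k::nat) (h::nat \<Rightarrow> ser).
          in_ideal k f \<and> (\<forall>i\<ge>k. homog i (h i)) \<and> f = (\<lambda>m. fsum (\<lambda>i. h i m) {k..})
          \<longrightarrow> (\<exists>P::nat \<Rightarrow> ser.
                 (\<forall>i\<ge>k. Av_deg N (int i) (P i) \<and> ser_pd (1, 1) (P i) = ser_zero)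
               \<and> F = (\<lambda>\<mu>. fsum (\<lambda>i. ser_mult (P i) (vx_pow (d - int i)) \<mu>) {k..})
               \<and> P k = h k))"
  using VT.main[OF VT.intro[OF N1 vt_valid vt_init vt_S vt_D] f_valid f_D F_valid F_pre] .

end
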